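(* Under the model described in the context, with $I_n$ defined as there, $\lim_{n\to\infty}E[I_n]=E[I_\lambda]$ and $\lim_{n\to\infty}\operatorname{Var}(I_n)=\operatorname{Var}(I_\lambda)$.
   Context: Let $\lambda>0$, $\alpha>2$. Transmitter locations form a Poisson point process $\Phi_\Lambda=\sum_{k\ge1}\delta_{\mathbf X_k}$ on $\mathbb R^2$ with locally finite mean measure $\Lambda$ and $\Lambda(\mathbb R^2)=\infty$. A test receiver is at a fixed point $\mathbf X_o$, $T(\mathbf x)=\|\mathbf x-\mathbf X_o\|_2$, and $\Lambda(\{\mathbf x: T(\mathbf x)\in A\})=\lambda\int_A p(t)\,dt$ for all Borel $A\subseteq[0,\infty)$, where $p\ge0$, $p(t)=O(t^{\alpha-1-\epsilon})$ as $t\to\infty$ for some $\epsilon>0$. The path-loss $G:[0,\infty)\to[0,\infty)$ is bounded, monotone non-increasing, $G(t)=O(t^{-\alpha})$ as $t\to\infty$. The fading coefficients $H_k\ge0$ are i.i.d. with density $q$, independent of $\Phi_\Lambda$, with finite first three moments. $P>0$. $I_\lambda=\sum_{k\ge1}PH_kG(T(\mathbf X_k))$. For each $n$, $\Lambda_n=\lambda\int_0^n p(t)\,dt$, $U_{1,n},\dots,U_{\lceil\Lambda_n\rceil,n}$ are i.i.d. with density $f(t)=\frac{\lambda p(t)}{\Lambda_n}\mathbf 1\{0\le t\le n\}$, independent of $(H_k)$, and $I_n=\sum_{k=1}^{\lceil\Lambda_n\rceil}PH_kG(U_{k,n})$. *)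

theory Defs
  imports "HOL-Probability.Probability" "HOL-Library.Landau_Symbols"
begin

definition pp_count :: "(nat \<Rightarrow> 'w \<Rightarrow> 'b) \<Rightarrow> 'b set \<Rightarrow> 'w \<Rightarrow> nat" where
  "pp_count X A \<omega> = card {k. X k \<omega> \<in> A}"

definition poisson_point_process ::
    "'w measure \<Rightarrow> ('b::topological_space) measure \<Rightarrow> (nat \<Rightarrow> 'w \<Rightarrow> 'b) \<Rightarrow> bool" where
  "poisson_point_process M \<Lambda> X \<longleftrightarrow>
     sets \<Lambda> = sets borel \<and>
     (\<forall>k. X k \<in> measurable M borel) \<and>
     (\<forall>A \<in> sets borel. emeasure \<Lambda> A < \<infinity> \<longrightarrow>
        (AE \<omega> in M. finite {k. X k \<omega> \<in> A}) \<and>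
        (\<forall>m::nat. measure M {\<omega> \<in> space M. pp_count X A \<omega> = m}
                   = measure \<Lambda> A ^ m / fact m * exp (- measure \<Lambda> A))) \<and>
     (\<forall>(A :: nat \<Rightarrow> 'b set) I. finite I \<longrightarrow>
        (\<forall>i\<in>I. A i \<in> sets borel \<and> emeasure \<Lambda> (A i) < \<infinity>) \<longrightarrow>
        disjoint_family_on A I \<longrightarrow>
        prob_space.indep_vars M (\<lambda>_. count_space UNIV) (\<lambda>i. pp_count X (A i)) I)"

text \<open>Independence of two random variables with possibly different codomains:
  the generated \<open>\<sigma>\<close>-algebras are independent (library \<open>indep_var\<close> requires equal codomain types).\<close>
definition indep_rvs ::
    "'w measure \<Rightarrow> 'a measure \<Rightarrow> ('w \<Rightarrow> 'a) \<Rightarrow> 'b measure \<Rightarrow> ('w \<Rightarrow> 'b) \<Rightarrow> bool" where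
  "indep_rvs M Ma A Mb B \<longleftrightarrow>
     A \<in> measurable M Ma \<and> B \<in> measurable M Mb \<and>
     prob_space.indep_sets M
       (case_bool (sets (vimage_algebra (space M) A Ma)) (sets (vimage_algebra (space M) B Mb))) UNIV"

end

theory Submission
  imports Defs
begin

lemma lin_ext:
  fixes LA LB :: "('a::topological_space \<Rightarrow> ennreal) \<Rightarrow> ennreal"
  assumes f: "f \<in> borel_measurable borel"
    and ind: "\<And>A. A \<in> sets borel \<Longrightarrow> LA (indicator A) = LB (indicator A)"
    and hom1: "\<And>u c. u \<in> borel_measurable borel \<Longrightarrow> LA (\<lambda>x. c * u x) = c * LA u"
    and hom2: "\<And>u c. u \<in> borel_measurable borel \<Longrightarrow> LB (\<lambda>x. c * u x) = c * LB u"
    and add1: "\<And>u v. u \<in> borel_measurable borel \<Longrightarrow> v \<in> borel_measurable borel \<Longrightarrow> LA (\<lambda>x. v x + u x) = LA v + LA u"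
    and add2: "\<And>u v. u \<in> borel_measurable borel \<Longrightarrow> v \<in> borel_measurable borel \<Longrightarrow> LB (\<lambda>x. v x + u x) = LB v + LB u"
    and sup1: "\<And>U. (\<And>i. U i \<in> borel_measurable borel) \<Longrightarrow> incseq U \<Longrightarrow> LA (SUP i. U i) = (SUP i. LA (U i))"
    and sup2: "\<And>U. (\<And>i. U i \<in> borel_measurable borel) \<Longrightarrow> incseq U \<Longrightarrow> LB (SUP i. U i) = (SUP i. LB (U i))"
  shows "LA f = LB f"
  using f
proof (induction rule: borel_measurable_induct)
  case (cong f g)
  then have "f = g" by auto
  then show ?case using cong by simp
next
  case (set A) then show ?case by (rule ind)
next
  case (mult u c) then show ?case by (simp add: hom1 hom2)
next
  case (add u v) then show ?case by (simp add: add1 add2)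
next
  case (seq U)
  have "LA (SUP i. U i) = (SUP i. LA (U i))" using seq by (intro sup1) auto
  moreover have "LB (SUP i. U i) = (SUP i. LB (U i))" using seq by (intro sup2) auto
  moreover have "(SUP i. LA (U i)) = (SUP i. LB (U i))" using seq by simp
  ultimately show ?case by (simp only:)
qed

lemma indep_var_nn:
  fixes F G :: "'w \<Rightarrow> ennreal"
  assumes M: "prob_space M" and I: "prob_space.indep_var M borel F borel G"
  shows "(\<integral>\<^sup>+\<omega>. F \<omega> * G \<omega> \<partial>M) = (\<integral>\<^sup>+\<omega>. F \<omega> \<partial>M) * (\<integral>\<^sup>+\<omega>. G \<omega> \<partial>M)"
proof -
  interpret prob_space M by (rule M)
  have *: "(\<lambda>\<omega>. F \<omega> * G \<omega>) = (\<lambda>\<omega>. \<Prod>i\<in>UNIV. (case_bool F G i \<omega>))"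
    by (simp add: UNIV_bool mult.commute)
  have **: "(\<lambda> _. borel) = case_bool borel borel"
    by (rule ext, metis (full_types) bool.simps(3) bool.simps(4))
  have "indep_vars (\<lambda>_. borel) (case_bool F G) UNIV"
    using I unfolding indep_var_def by (subst **)
  then have "(\<integral>\<^sup>+\<omega>. (\<Prod>i\<in>UNIV. (case_bool F G i \<omega>)) \<partial>M) = (\<Prod>i\<in>UNIV. \<integral>\<^sup>+\<omega>. case_bool F G i \<omega> \<partial>M)"
    by (intro indep_vars_nn_integral) auto
  then show ?thesis unfolding * by (simp add: UNIV_bool mult.commute)
qed

lemma vimage_comp_in_vimage_algebra:
  assumes C: "C \<in> measurable M Mc" and h: "h \<in> measurable Mc N" and S: "S \<in> sets N"
  shows "(\<lambda>\<omega>. h (C \<omega>)) -` S \<inter> space M \<in> sets (vimage_algebra (space M) C Mc)"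
proof -
  have "(\<lambda>\<omega>. h (C \<omega>)) -` S \<inter> space M = C -` (h -` S \<inter> space Mc) \<inter> space M"
    using C by (auto simp: measurable_def)
  moreover have "h -` S \<inter> space Mc \<in> sets Mc" using h S by (auto simp: measurable_def)
  ultimately show ?thesis by (metis (no_types) in_vimage_algebra)
qed

lemma indep_rvs_var:
  fixes f :: "'a \<Rightarrow> 'c::topological_space" and g :: "'b \<Rightarrow> 'c"
  assumes M: "prob_space M" and I: "indep_rvs M Ma A Mb B"
    and f: "f \<in> borel_measurable Ma" and g: "g \<in> borel_measurable Mb"
  shows "prob_space.indep_var M borel (\<lambda>\<omega>. f (A \<omega>)) borel (\<lambda>\<omega>. g (B \<omega>))"
proof -
  interpret prob_space M by (rule M)
  have A: "A \<in> measurable M Ma" and B: "B \<in> measurable M Mb"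
    and IS: "indep_sets (case_bool (sets (vimage_algebra (space M) A Ma)) (sets (vimage_algebra (space M) B Mb))) UNIV"
    using I unfolding indep_rvs_def by auto
  have fA: "(\<lambda>\<omega>. f (A \<omega>)) \<in> borel_measurable M" using f A by measurable
  have gB: "(\<lambda>\<omega>. g (B \<omega>)) \<in> borel_measurable M" using g B by measurable
  show ?thesis
    unfolding indep_var_def indep_vars_def2
  proof (intro conjI ballI)
    fix i :: bool show "random_variable (case_bool borel borel i) (case_bool (\<lambda>\<omega>. f (A \<omega>)) (\<lambda>\<omega>. g (B \<omega>)) i)"
      using fA gB by (cases i) auto
  next
    show "indep_sets (\<lambda>i. {case_bool (\<lambda>\<omega>. f (A \<omega>)) (\<lambda>\<omega>. g (B \<omega>)) i -` S \<inter> space M |S. S \<in> sets (case_bool borel borel i)}) UNIV"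
      by (rule indep_sets_mono_sets[OF IS])
         (auto split: bool.split intro!: vimage_comp_in_vimage_algebra A B f g)
  qed
qed

lemma aux1: "(a::real) > 0 \<Longrightarrow> F > 0 \<Longrightarrow> a*(\<mu>*y/(a*F)*e) = \<mu>*e*(y/F)"
  by (simp add: field_simps)
lemma aux2: "(a::real) > 0 \<Longrightarrow> F > 0 \<Longrightarrow> (1+a)*((1+a)-1)*(\<mu>*(\<mu>*y)/((1+a)*(a*F))*e) = \<mu>^2*e*(y/F)"
proof -
  assume a: "a > 0" "F > 0"
  define b where "b = (1+a)*a"
  have b: "b > 0" using a by (simp add: b_def)
  have "(1+a)*((1+a)-1)*(\<mu>*(\<mu>*y)/((1+a)*(a*F))*e) = b*(\<mu>*(\<mu>*y)/(b*F)*e)"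
    by (simp add: b_def mult.assoc)
  also have "\<dots> = \<mu>^2*e*(y/F)" using b a by (simp add: field_simps power2_eq_square)
  finally show ?thesis .
qed

lemma ennreal_nat_mult: "0 \<le> y \<Longrightarrow> of_nat m * ennreal y = ennreal (real m * y)"
  by (simp add: ennreal_mult ennreal_of_nat_eq_real_of_nat)
lemma ennreal_nat_mult2: "0 \<le> y \<Longrightarrow> of_nat m * of_nat m * ennreal y = ennreal ((real m)^2 * y)"
  by (simp add: ennreal_mult ennreal_of_nat_eq_real_of_nat power2_eq_square)

lemma poisson_sums1:
  fixes \<mu> :: real
  shows "(\<lambda>m. real m * (\<mu>^m / fact m * exp (-\<mu>))) sums \<mu>"
proof -
  have e: "(\<lambda>n. \<mu>^n / fact n) sums exp \<mu>"
    using exp_converges[of \<mu>] by (simp add: divide_inverse mult.commute scaleR_conv_of_real)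
  have "(\<lambda>n. \<mu> * exp (-\<mu>) * (\<mu>^n / fact n)) sums (\<mu> * exp (-\<mu>) * exp \<mu>)"
    by (rule sums_mult[OF e])
  moreover have "\<mu> * exp (-\<mu>) * exp \<mu> = \<mu>" by (simp add: exp_minus field_simps)
  moreover have "(\<lambda>n. \<mu> * exp (-\<mu>) * (\<mu>^n / fact n)) = (\<lambda>n. real (Suc n) * (\<mu>^(Suc n) / fact (Suc n) * exp (-\<mu>)))"
  proof
    fix n
    show "\<mu> * exp (-\<mu>) * (\<mu>^n / fact n) = real (Suc n) * (\<mu>^(Suc n) / fact (Suc n) * exp (-\<mu>))"
      by (subst fact_Suc, subst power_Suc, rule aux1[symmetric]) auto
  qed
  ultimately have "(\<lambda>n. real (Suc n) * (\<mu>^(Suc n) / fact (Suc n) * exp (-\<mu>))) sums \<mu>" by (simp only:)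
  then show ?thesis by (subst (asm) sums_Suc_iff) simp
qed

lemma poisson_sums2:
  fixes \<mu> :: real
  shows "(\<lambda>m. real m * (real m - 1) * (\<mu>^m / fact m * exp (-\<mu>))) sums \<mu>^2"
proof -
  have e: "(\<lambda>n. \<mu>^n / fact n) sums exp \<mu>"
    using exp_converges[of \<mu>] by (simp add: divide_inverse mult.commute scaleR_conv_of_real)
  have "(\<lambda>n. \<mu>^2 * exp (-\<mu>) * (\<mu>^n / fact n)) sums (\<mu>^2 * exp (-\<mu>) * exp \<mu>)"
    by (rule sums_mult[OF e])
  moreover have "\<mu>^2 * exp (-\<mu>) * exp \<mu> = \<mu>^2" by (simp add: exp_minus field_simps)
  moreover have "(\<lambda>n. \<mu>^2 * exp (-\<mu>) * (\<mu>^n / fact n)) = (\<lambda>n. real (Suc (Suc n)) * (real (Suc (Suc n)) - 1) * (\<mu>^(Suc (Suc n)) / fact (Suc (Suc n)) * exp (-\<mu>)))"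
  proof
    fix n
    show "\<mu>^2 * exp (-\<mu>) * (\<mu>^n / fact n) = real (Suc (Suc n)) * (real (Suc (Suc n)) - 1) * (\<mu>^(Suc (Suc n)) / fact (Suc (Suc n)) * exp (-\<mu>))"
    proof -
      have r: "real (Suc (Suc n)) = 1 + real (Suc n)" by simp
      have f: "(fact (Suc (Suc n))::real) = real (Suc (Suc n)) * (real (Suc n) * fact n)" by (simp only: fact_Suc)
      have p: "\<mu>^Suc(Suc n) = \<mu>*(\<mu>*\<mu>^n)" by simp
      show ?thesis unfolding f p r by (rule aux2[symmetric]) auto
    qed
  qed
  ultimately have "(\<lambda>n. real (Suc (Suc n)) * (real (Suc (Suc n)) - 1) * (\<mu>^(Suc (Suc n)) / fact (Suc (Suc n)) * exp (-\<mu>))) sums \<mu>^2" by (simp only:)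
  then have "(\<lambda>n. real (Suc n) * (real (Suc n) - 1) * (\<mu>^(Suc n) / fact (Suc n) * exp (-\<mu>))) sums \<mu>^2"
    by (subst (asm) sums_Suc_iff) simp
  then show ?thesis by (subst (asm) sums_Suc_iff) simp
qed

lemma poisson_sums_sq:
  fixes \<mu> :: real
  shows "(\<lambda>m. (real m)^2 * (\<mu>^m / fact m * exp (-\<mu>))) sums (\<mu>^2 + \<mu>)"
proof -
  have "(\<lambda>m. real m * (real m - 1) * (\<mu>^m / fact m * exp (-\<mu>)) + real m * (\<mu>^m / fact m * exp (-\<mu>))) sums (\<mu>^2 + \<mu>)"
    by (intro sums_add poisson_sums1 poisson_sums2)
  moreover have "\<And>m. real m * (real m - 1) * (\<mu>^m / fact m * exp (-\<mu>)) + real m * (\<mu>^m / fact m * exp (-\<mu>))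
     = (real m)^2 * (\<mu>^m / fact m * exp (-\<mu>))"
  proof -
    fix m
    show "real m * (real m - 1) * (\<mu>^m / fact m * exp (-\<mu>)) + real m * (\<mu>^m / fact m * exp (-\<mu>))
     = (real m)^2 * (\<mu>^m / fact m * exp (-\<mu>))"
      unfolding distrib_right[symmetric] by (simp add: power2_eq_square algebra_simps)
  qed
  ultimately show ?thesis by simp
qed

locale ppp =
  fixes M :: "'w measure" and \<Lambda> :: "'b::topological_space measure" and X :: "nat \<Rightarrow> 'w \<Rightarrow> 'b"
  assumes Mprob: "prob_space M" and PPP: "poisson_point_process M \<Lambda> X"
begin

sublocale prob_space M by (rule Mprob)

definition N :: "'b set \<Rightarrow> 'w \<Rightarrow> ennreal" where
  "N A \<omega> = (\<Sum>k. indicator A (X k \<omega>))"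

lemma sets_Lambda: "sets \<Lambda> = sets borel" using PPP unfolding poisson_point_process_def by auto

lemma X_meas[measurable]: "X k \<in> measurable M borel" using PPP unfolding poisson_point_process_def by auto

lemma N_meas[measurable]: assumes [measurable]: "A \<in> sets borel" shows "N A \<in> borel_measurable M"
  unfolding N_def by measurable

lemma count_rv:
  assumes A: "A \<in> sets borel" "emeasure \<Lambda> A < \<infinity>"
  shows "pp_count X A \<in> measurable M (count_space UNIV)"
proof -
  have "indep_vars (\<lambda>_. count_space UNIV) (\<lambda>i. pp_count X ((\<lambda>_. A) i)) {0::nat}"
    using PPP A unfolding poisson_point_process_def
    by (auto simp: disjoint_family_on_def)
  then show ?thesis unfolding indep_vars_def by auto
qed

lemma count_dist:
  assumes A: "A \<in> sets borel" "emeasure \<Lambda> A < \<infinity>"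
  shows "measure M {\<omega> \<in> space M. pp_count X A \<omega> = m} = measure \<Lambda> A ^ m / fact m * exp (- measure \<Lambda> A)"
  using PPP A unfolding poisson_point_process_def by auto

lemma count_fin:
  assumes A: "A \<in> sets borel" "emeasure \<Lambda> A < \<infinity>"
  shows "AE \<omega> in M. finite {k. X k \<omega> \<in> A}"
  using PPP A unfolding poisson_point_process_def by auto

lemma N_count:
  assumes A: "A \<in> sets borel" "emeasure \<Lambda> A < \<infinity>"
  shows "AE \<omega> in M. N A \<omega> = of_nat (pp_count X A \<omega>)"
  using count_fin[OF A]
proof eventually_elim
  case (elim \<omega>)
  have "N A \<omega> = (\<Sum>k\<in>{k. X k \<omega> \<in> A}. indicator A (X k \<omega>))"
    unfolding N_def by (rule suminf_finite[OF elim]) auto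
  also have "\<dots> = of_nat (card {k. X k \<omega> \<in> A})" by simp
  finally show ?case by (simp add: pp_count_def)
qed

lemma count_nn_integral:
  assumes A: "A \<in> sets borel" "emeasure \<Lambda> A < \<infinity>"
  shows "(\<integral>\<^sup>+\<omega>. f (pp_count X A \<omega>) \<partial>M) = (\<Sum>m. f m * ennreal (measure \<Lambda> A ^ m / fact m * exp (- measure \<Lambda> A)))"
proof -
  note rv = count_rv[OF A]
  have S: "{\<omega> \<in> space M. pp_count X A \<omega> = m} \<in> sets M" for m
    using measurable_sets[OF rv, of "{m}"] by (simp add: vimage_def Int_def conj_commute)
  have "(\<integral>\<^sup>+\<omega>. f (pp_count X A \<omega>) \<partial>M) = (\<integral>\<^sup>+\<omega>. (\<Sum>m. f m * indicator {\<omega> \<in> space M. pp_count X A \<omega> = m} \<omega>) \<partial>M)"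
  proof (rule nn_integral_cong)
    fix \<omega> assume "\<omega> \<in> space M"
    have "(\<Sum>m. f m * indicator {\<omega> \<in> space M. pp_count X A \<omega> = m} \<omega>) = (\<Sum>m\<in>{pp_count X A \<omega>}. f m * indicator {\<omega> \<in> space M. pp_count X A \<omega> = m} \<omega>)"
      by (rule suminf_finite) (auto simp: indicator_def)
    then show "f (pp_count X A \<omega>) = (\<Sum>m. f m * indicator {\<omega> \<in> space M. pp_count X A \<omega> = m} \<omega>)"
      using \<open>\<omega> \<in> space M\<close> by simp
  qed
  also have "\<dots> = (\<Sum>m. \<integral>\<^sup>+\<omega>. f m * indicator {\<omega> \<in> space M. pp_count X A \<omega> = m} \<omega> \<partial>M)"
    by (rule nn_integral_suminf) (use S in auto)
  also have "\<dots> = (\<Sum>m. f m * emeasure M {\<omega> \<in> space M. pp_count X A \<omega> = m})"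
    using S by (simp add: nn_integral_cmult_indicator)
  also have "\<dots> = (\<Sum>m. f m * ennreal (measure \<Lambda> A ^ m / fact m * exp (- measure \<Lambda> A)))"
    using S by (simp add: emeasure_eq_measure count_dist[OF A])
  finally show ?thesis .
qed

lemma E_N:
  assumes A: "A \<in> sets borel" "emeasure \<Lambda> A < \<infinity>"
  shows "(\<integral>\<^sup>+\<omega>. N A \<omega> \<partial>M) = emeasure \<Lambda> A"
proof -
  let ?\<mu> = "measure \<Lambda> A"
  have "(\<integral>\<^sup>+\<omega>. N A \<omega> \<partial>M) = (\<integral>\<^sup>+\<omega>. of_nat (pp_count X A \<omega>) \<partial>M)"
    by (rule nn_integral_cong_AE) (rule N_count[OF A])
  also have "\<dots> = (\<Sum>m. of_nat m * ennreal (?\<mu> ^ m / fact m * exp (- ?\<mu>)))"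
    by (rule count_nn_integral[OF A])
  also have "\<dots> = (\<Sum>m. ennreal (real m * (?\<mu> ^ m / fact m * exp (- ?\<mu>))))"
    by (intro suminf_cong ennreal_nat_mult) (simp add: measure_nonneg)
  also have "\<dots> = ennreal ?\<mu>"
    by (rule suminf_ennreal_eq[OF _ poisson_sums1]) simp
  also have "\<dots> = emeasure \<Lambda> A" using A by (simp add: emeasure_eq_ennreal_measure)
  finally show ?thesis .
qed

lemma E_N2:
  assumes A: "A \<in> sets borel" "emeasure \<Lambda> A < \<infinity>"
  shows "(\<integral>\<^sup>+\<omega>. N A \<omega> * N A \<omega> \<partial>M) = emeasure \<Lambda> A * emeasure \<Lambda> A + emeasure \<Lambda> A"
proof -
  let ?\<mu> = "measure \<Lambda> A"
  have "(\<integral>\<^sup>+\<omega>. N A \<omega> * N A \<omega> \<partial>M) = (\<integral>\<^sup>+\<omega>. of_nat (pp_count X A \<omega>) * of_nat (pp_count X A \<omega>) \<partial>M)"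
    by (rule nn_integral_cong_AE) (use N_count[OF A] in auto)
  also have "\<dots> = (\<Sum>m. of_nat m * of_nat m * ennreal (?\<mu> ^ m / fact m * exp (- ?\<mu>)))"
    by (rule count_nn_integral[OF A])
  also have "\<dots> = (\<Sum>m. ennreal ((real m)^2 * (?\<mu> ^ m / fact m * exp (- ?\<mu>))))"
    by (intro suminf_cong ennreal_nat_mult2) (simp add: measure_nonneg)
  also have "\<dots> = ennreal (?\<mu>^2 + ?\<mu>)"
    by (rule suminf_ennreal_eq[OF _ poisson_sums_sq]) simp
  also have "\<dots> = emeasure \<Lambda> A * emeasure \<Lambda> A + emeasure \<Lambda> A" using A
    by (simp add: emeasure_eq_ennreal_measure ennreal_plus[symmetric] ennreal_mult[symmetric] power2_eq_square del: ennreal_plus)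
  finally show ?thesis .
qed

end

lemma indep_vars_pair_nn:
  fixes F G :: "'b \<Rightarrow> ennreal"
  assumes M: "prob_space M" and I: "prob_space.indep_vars M M' X I"
    and ij: "i \<in> I" "j \<in> I" "i \<noteq> j"
    and F: "F \<in> borel_measurable (M' i)" and G: "G \<in> borel_measurable (M' j)"
  shows "(\<integral>\<^sup>+\<omega>. F (X i \<omega>) * G (X j \<omega>) \<partial>M) = (\<integral>\<^sup>+\<omega>. F (X i \<omega>) \<partial>M) * (\<integral>\<^sup>+\<omega>. G (X j \<omega>) \<partial>M)"
proof -
  interpret prob_space M by (rule M)
  define Y where "Y k = (if k = i then F else G)" for k
  have "indep_vars M' X {i, j}" using I ij by (intro indep_vars_subset[OF I]) auto
  then have "indep_vars (\<lambda>_. borel) (\<lambda>k \<omega>. Y k (X k \<omega>)) {i, j}"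
    by (rule indep_vars_compose2) (use F G ij in \<open>auto simp: Y_def\<close>)
  then have "(\<integral>\<^sup>+\<omega>. (\<Prod>k\<in>{i,j}. Y k (X k \<omega>)) \<partial>M) = (\<Prod>k\<in>{i,j}. \<integral>\<^sup>+\<omega>. Y k (X k \<omega>) \<partial>M)"
    by (intro indep_vars_nn_integral) auto
  then show ?thesis using ij by (simp add: Y_def)
qed

context ppp
begin

lemma N_Un: "A \<inter> B = {} \<Longrightarrow> N (A \<union> B) \<omega> = N A \<omega> + N B \<omega>"
proof -
  assume AB: "A \<inter> B = {}"
  have "(\<Sum>k. indicator (A \<union> B) (X k \<omega>)) = (\<Sum>k. indicator A (X k \<omega>) + indicator B (X k \<omega>) :: ennreal)"
    using AB by (intro suminf_cong) (auto simp: indicator_def)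
  also have "\<dots> = (\<Sum>k. indicator A (X k \<omega>)) + (\<Sum>k. indicator B (X k \<omega>) :: ennreal)"
    by (rule suminf_add[symmetric]) auto
  finally show ?thesis unfolding N_def .
qed

lemma N_mono: "A \<subseteq> B \<Longrightarrow> N A \<omega> \<le> N B \<omega>"
  unfolding N_def by (intro suminf_le) (auto simp: indicator_def)

lemma E_N_disj:
  assumes A: "A \<in> sets borel" "emeasure \<Lambda> A < \<infinity>" and B: "B \<in> sets borel" "emeasure \<Lambda> B < \<infinity>"
    and AB: "A \<inter> B = {}"
  shows "(\<integral>\<^sup>+\<omega>. N A \<omega> * N B \<omega> \<partial>M) = emeasure \<Lambda> A * emeasure \<Lambda> B"
proof -
  define AA where "AA i = (if i = (0::nat) then A else B)" for i
  have ind: "\<forall>(A :: nat \<Rightarrow> 'b set) I. finite I \<longrightarrow>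
        (\<forall>i\<in>I. A i \<in> sets borel \<and> emeasure \<Lambda> (A i) < \<infinity>) \<longrightarrow>
        disjoint_family_on A I \<longrightarrow>
        indep_vars (\<lambda>_. count_space UNIV) (\<lambda>i. pp_count X (A i)) I"
    using PPP unfolding poisson_point_process_def by (elim conjE) assumption
  have "disjoint_family_on AA {0,1}" using AB by (auto simp: AA_def disjoint_family_on_def)
  moreover have "\<forall>i\<in>{0,1}. AA i \<in> sets borel \<and> emeasure \<Lambda> (AA i) < \<infinity>" using A B by (auto simp: AA_def)
  ultimately have "indep_vars (\<lambda>_. count_space UNIV) (\<lambda>i. pp_count X (AA i)) {0,1}"
    using ind by simp
  then have "(\<integral>\<^sup>+\<omega>. of_nat (pp_count X (AA 0) \<omega>) * of_nat (pp_count X (AA 1) \<omega>) \<partial>M)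
     = (\<integral>\<^sup>+\<omega>. of_nat (pp_count X (AA 0) \<omega>) \<partial>M) * (\<integral>\<^sup>+\<omega>. of_nat (pp_count X (AA 1) \<omega>) \<partial>M)"
    by (intro indep_vars_pair_nn[OF Mprob]) auto
  then have "(\<integral>\<^sup>+\<omega>. of_nat (pp_count X A \<omega>) * of_nat (pp_count X B \<omega>) \<partial>M)
     = (\<integral>\<^sup>+\<omega>. of_nat (pp_count X A \<omega>) \<partial>M) * (\<integral>\<^sup>+\<omega>. of_nat (pp_count X B \<omega>) \<partial>M)"
    by (simp add: AA_def)
  moreover have "(\<integral>\<^sup>+\<omega>. N A \<omega> * N B \<omega> \<partial>M) = (\<integral>\<^sup>+\<omega>. of_nat (pp_count X A \<omega>) * of_nat (pp_count X B \<omega>) \<partial>M)"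
    by (rule nn_integral_cong_AE) (use N_count[OF A] N_count[OF B] in auto)
  moreover have "(\<integral>\<^sup>+\<omega>. N A \<omega> \<partial>M) = (\<integral>\<^sup>+\<omega>. of_nat (pp_count X A \<omega>) \<partial>M)"
    by (rule nn_integral_cong_AE) (use N_count[OF A] in auto)
  moreover have "(\<integral>\<^sup>+\<omega>. N B \<omega> \<partial>M) = (\<integral>\<^sup>+\<omega>. of_nat (pp_count X B \<omega>) \<partial>M)"
    by (rule nn_integral_cong_AE) (use N_count[OF B] in auto)
  ultimately show ?thesis using E_N[OF A] E_N[OF B] by simp
qed

lemma E_NN:
  assumes A: "A \<in> sets borel" "emeasure \<Lambda> A < \<infinity>" and B: "B \<in> sets borel" "emeasure \<Lambda> B < \<infinity>"
  shows "(\<integral>\<^sup>+\<omega>. N A \<omega> * N B \<omega> \<partial>M) = emeasure \<Lambda> A * emeasure \<Lambda> B + emeasure \<Lambda> (A \<inter> B)"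
proof -
  let ?A = "A - B" and ?B = "B - A" and ?C = "A \<inter> B"
  have sA: "?A \<in> sets borel" "emeasure \<Lambda> ?A < \<infinity>"
    using A B sets_Lambda by (auto intro: le_less_trans[OF emeasure_mono])
  have sB: "?B \<in> sets borel" "emeasure \<Lambda> ?B < \<infinity>"
    using A B sets_Lambda by (auto intro: le_less_trans[OF emeasure_mono])
  have sC: "?C \<in> sets borel" "emeasure \<Lambda> ?C < \<infinity>"
    using A B sets_Lambda by (auto intro: le_less_trans[OF emeasure_mono])
  have eA: "A = ?A \<union> ?C" and eB: "B = ?B \<union> ?C" by auto
  have NA: "N A \<omega> = N ?A \<omega> + N ?C \<omega>" for \<omega> by (subst eA, rule N_Un) auto
  have NB: "N B \<omega> = N ?B \<omega> + N ?C \<omega>" for \<omega> by (subst eB, rule N_Un) auto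
  have LA: "emeasure \<Lambda> A = emeasure \<Lambda> ?A + emeasure \<Lambda> ?C"
    using sA sC sets_Lambda by (subst eA, subst plus_emeasure) auto
  have LB: "emeasure \<Lambda> B = emeasure \<Lambda> ?B + emeasure \<Lambda> ?C"
    using sB sC sets_Lambda by (subst eB, subst plus_emeasure) auto
  note [measurable] = sA(1) sB(1) sC(1)
  have "(\<integral>\<^sup>+\<omega>. N A \<omega> * N B \<omega> \<partial>M) =
     (\<integral>\<^sup>+\<omega>. (N ?A \<omega> * N ?B \<omega> + N ?A \<omega> * N ?C \<omega>) + (N ?C \<omega> * N ?B \<omega> + N ?C \<omega> * N ?C \<omega>) \<partial>M)"
    unfolding NA NB by (simp add: algebra_simps)
  also have "\<dots> = ((\<integral>\<^sup>+\<omega>. N ?A \<omega> * N ?B \<omega> \<partial>M) + (\<integral>\<^sup>+\<omega>. N ?A \<omega> * N ?C \<omega> \<partial>M))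
       + ((\<integral>\<^sup>+\<omega>. N ?C \<omega> * N ?B \<omega> \<partial>M) + (\<integral>\<^sup>+\<omega>. N ?C \<omega> * N ?C \<omega> \<partial>M))"
    by (simp add: nn_integral_add)
  also have "\<dots> = (emeasure \<Lambda> ?A * emeasure \<Lambda> ?B + emeasure \<Lambda> ?A * emeasure \<Lambda> ?C)
       + (emeasure \<Lambda> ?C * emeasure \<Lambda> ?B + (emeasure \<Lambda> ?C * emeasure \<Lambda> ?C + emeasure \<Lambda> ?C))"
  proof -
    have d1: "?A \<inter> ?B = {}" "?A \<inter> ?C = {}" "?C \<inter> ?B = {}" by auto
    show ?thesis using E_N_disj[OF sA sB d1(1)] E_N_disj[OF sA sC d1(2)] E_N_disj[OF sC sB d1(3)] E_N2[OF sC]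
      by simp
  qed
  also have "\<dots> = emeasure \<Lambda> A * emeasure \<Lambda> B + emeasure \<Lambda> (A \<inter> B)"
    unfolding LA LB by (simp add: distrib_left distrib_right ac_simps)
  finally show ?thesis .
qed

end

lemma SUP_mult_incseq:
  fixes a b :: "nat \<Rightarrow> ennreal"
  assumes a: "incseq a" and b: "incseq b"
  shows "(SUP i. a i) * (SUP i. b i) = (SUP i. a i * b i)"
proof (rule antisym)
  show "(SUP i. a i) * (SUP i. b i) \<le> (SUP i. a i * b i)"
    unfolding SUP_mult_right_ennreal
  proof (rule SUP_least)
    fix i
    show "a i * (SUP i. b i) \<le> (SUP i. a i * b i)"
      unfolding SUP_mult_left_ennreal
    proof (rule SUP_least)
      fix j
      have "a i * b j \<le> a (max i j) * b (max i j)"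
        using a b by (intro mult_mono) (auto simp: incseq_def)
      also have "\<dots> \<le> (SUP i. a i * b i)" by (rule SUP_upper) auto
      finally show "a i * b j \<le> (SUP i. a i * b i)" .
    qed
  qed
next
  show "(SUP i. a i * b i) \<le> (SUP i. a i) * (SUP i. b i)"
    by (rule SUP_least, rule mult_mono) (auto intro: SUP_upper)
qed

context ppp
begin

definition T :: "('b \<Rightarrow> ennreal) \<Rightarrow> 'w \<Rightarrow> ennreal" where
  "T f \<omega> = (\<Sum>k. f (X k \<omega>))"

lemma T_meas: "f \<in> borel_measurable borel \<Longrightarrow> T f \<in> borel_measurable M"
  unfolding T_def by (intro borel_measurable_suminf_order measurable_compose[OF X_meas])

lemma meas_Lambda: "borel_measurable \<Lambda> = borel_measurable borel"
  by (rule measurable_cong_sets[OF sets_Lambda refl])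

lemma T_indicator: "T (\<lambda>x. indicator A x * indicator K x) \<omega> = N (A \<inter> K) \<omega>"
  unfolding T_def N_def by (intro suminf_cong) (simp add: indicator_inter_arith)

lemma T_cmult: "T (\<lambda>x. c * u x) \<omega> = c * T u \<omega>"
  unfolding T_def by simp

lemma T_add: "T (\<lambda>x. v x + u x) \<omega> = T v \<omega> + T u \<omega>"
  unfolding T_def by (rule suminf_add[symmetric]) auto

lemma T_SUP: "incseq U \<Longrightarrow> T (\<lambda>x. SUP i. U i x) \<omega> = (SUP i. T (U i) \<omega>)"
  unfolding T_def by (rule ennreal_suminf_SUP_eq) (auto simp: incseq_def le_fun_def)

lemma L1_props:
  fixes Z :: "'w \<Rightarrow> ennreal" and K :: "'b set"
  assumes Z[measurable]: "Z \<in> borel_measurable M" and K[measurable]: "K \<in> sets borel"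
  defines "L \<equiv> (\<lambda>f. \<integral>\<^sup>+\<omega>. T (\<lambda>x. f x * indicator K x) \<omega> * Z \<omega> \<partial>M)"
  shows "\<And>u c. u \<in> borel_measurable borel \<Longrightarrow> L (\<lambda>x. c * u x) = c * L u"
    and "\<And>u v. u \<in> borel_measurable borel \<Longrightarrow> v \<in> borel_measurable borel \<Longrightarrow> L (\<lambda>x. v x + u x) = L v + L u"
    and "\<And>U. (\<And>i. U i \<in> borel_measurable borel) \<Longrightarrow> incseq U \<Longrightarrow> L (SUP i. U i) = (SUP i. L (U i))"
proof -
  have Tm: "(\<lambda>\<omega>. T (\<lambda>x. f x * indicator K x) \<omega> * Z \<omega>) \<in> borel_measurable M"
    if "f \<in> borel_measurable borel" for f :: "'b \<Rightarrow> ennreal"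
  proof -
    note [measurable] = that
    have "(\<lambda>x. f x * indicator K x) \<in> borel_measurable borel" by measurable
    note [measurable] = T_meas[OF this]
    show ?thesis by measurable
  qed
  fix u :: "'b \<Rightarrow> ennreal" and c :: ennreal assume u: "u \<in> borel_measurable borel"
  have "L (\<lambda>x. c * u x) = (\<integral>\<^sup>+\<omega>. c * (T (\<lambda>x. u x * indicator K x) \<omega> * Z \<omega>) \<partial>M)"
    unfolding L_def by (intro nn_integral_cong) (simp only: mult.assoc T_cmult)
  also have "\<dots> = c * L u" unfolding L_def by (rule nn_integral_cmult[OF Tm[OF u]])
  finally show "L (\<lambda>x. c * u x) = c * L u" .
next
  have Tm: "(\<lambda>\<omega>. T (\<lambda>x. f x * indicator K x) \<omega> * Z \<omega>) \<in> borel_measurable M"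
    if "f \<in> borel_measurable borel" for f :: "'b \<Rightarrow> ennreal"
  proof -
    note [measurable] = that
    have "(\<lambda>x. f x * indicator K x) \<in> borel_measurable borel" by measurable
    note [measurable] = T_meas[OF this]
    show ?thesis by measurable
  qed
  fix u v :: "'b \<Rightarrow> ennreal" assume u: "u \<in> borel_measurable borel" and v: "v \<in> borel_measurable borel"
  have "L (\<lambda>x. v x + u x) = (\<integral>\<^sup>+\<omega>. T (\<lambda>x. v x * indicator K x) \<omega> * Z \<omega> + T (\<lambda>x. u x * indicator K x) \<omega> * Z \<omega> \<partial>M)"
    unfolding L_def by (intro nn_integral_cong) (simp only: distrib_right T_add)
  also have "\<dots> = L v + L u" unfolding L_def by (rule nn_integral_add[OF Tm[OF v] Tm[OF u]])
  finally show "L (\<lambda>x. v x + u x) = L v + L u" .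
next
  have Tm: "(\<lambda>\<omega>. T (\<lambda>x. f x * indicator K x) \<omega> * Z \<omega>) \<in> borel_measurable M"
    if "f \<in> borel_measurable borel" for f :: "'b \<Rightarrow> ennreal"
  proof -
    note [measurable] = that
    have "(\<lambda>x. f x * indicator K x) \<in> borel_measurable borel" by measurable
    note [measurable] = T_meas[OF this]
    show ?thesis by measurable
  qed
  fix U :: "nat \<Rightarrow> 'b \<Rightarrow> ennreal" assume U: "\<And>i. U i \<in> borel_measurable borel" and inc: "incseq U"
  have inc2: "incseq (\<lambda>i x. U i x * indicator K x)"
    using inc by (auto simp: incseq_def le_fun_def intro: mult_right_mono)
  have inc3: "incseq (\<lambda>i \<omega>. T (\<lambda>x. U i x * indicator K x) \<omega> * Z \<omega>)"
    using inc2 inc unfolding incseq_def le_fun_def T_def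
    by (auto intro!: mult_right_mono suminf_le)
  have "L (SUP i. U i) = (\<integral>\<^sup>+\<omega>. (SUP i. T (\<lambda>x. U i x * indicator K x) \<omega> * Z \<omega>) \<partial>M)"
    unfolding L_def
  proof (intro nn_integral_cong)
    fix \<omega>
    have "T (\<lambda>x. (SUP i. U i) x * indicator K x) \<omega> = T (\<lambda>x. SUP i. U i x * indicator K x) \<omega>"
      by (simp only: SUP_apply SUP_mult_right_ennreal)
    also have "\<dots> = (SUP i. T (\<lambda>x. U i x * indicator K x) \<omega>)" by (rule T_SUP[OF inc2])
    finally show "T (\<lambda>x. (SUP i. U i) x * indicator K x) \<omega> * Z \<omega> = (SUP i. T (\<lambda>x. U i x * indicator K x) \<omega> * Z \<omega>)"
      by (simp add: SUP_mult_right_ennreal)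
  qed
  also have "\<dots> = (SUP i. L (U i))" unfolding L_def
    by (rule nn_integral_monotone_convergence_SUP[OF inc3 Tm[OF U]])
  finally show "L (SUP i. U i) = (SUP i. L (U i))" .
qed

lemma L2_props:
  fixes w :: "'b \<Rightarrow> ennreal" and K :: "'b set" and c :: ennreal
  assumes w[measurable]: "w \<in> borel_measurable borel" and K[measurable]: "K \<in> sets borel"
  defines "L \<equiv> (\<lambda>f. c * (\<integral>\<^sup>+x. f x * indicator K x \<partial>\<Lambda>) + (\<integral>\<^sup>+x. f x * w x * indicator K x \<partial>\<Lambda>))"
  shows "\<And>u a. u \<in> borel_measurable borel \<Longrightarrow> L (\<lambda>x. a * u x) = a * L u"
    and "\<And>u v. u \<in> borel_measurable borel \<Longrightarrow> v \<in> borel_measurable borel \<Longrightarrow> L (\<lambda>x. v x + u x) = L v + L u"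
    and "\<And>U. (\<And>i. U i \<in> borel_measurable borel) \<Longrightarrow> incseq U \<Longrightarrow> L (SUP i. U i) = (SUP i. L (U i))"
proof -
  fix u :: "'b \<Rightarrow> ennreal" and a :: ennreal assume u[measurable]: "u \<in> borel_measurable borel"
  have m1: "(\<lambda>x. u x * indicator K x) \<in> borel_measurable \<Lambda>" unfolding meas_Lambda by measurable
  have m2: "(\<lambda>x. u x * w x * indicator K x) \<in> borel_measurable \<Lambda>" unfolding meas_Lambda by measurable
  show "L (\<lambda>x. a * u x) = a * L u" unfolding L_def
    using nn_integral_cmult[OF m1, of a] nn_integral_cmult[OF m2, of a]
    by (simp add: mult.assoc distrib_left mult.left_commute)
next
  fix u v :: "'b \<Rightarrow> ennreal" assume u[measurable]: "u \<in> borel_measurable borel" and v[measurable]: "v \<in> borel_measurable borel"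
  have m1: "(\<lambda>x. u x * indicator K x) \<in> borel_measurable \<Lambda>" unfolding meas_Lambda by measurable
  have m2: "(\<lambda>x. u x * w x * indicator K x) \<in> borel_measurable \<Lambda>" unfolding meas_Lambda by measurable
  have m3: "(\<lambda>x. v x * indicator K x) \<in> borel_measurable \<Lambda>" unfolding meas_Lambda by measurable
  have m4: "(\<lambda>x. v x * w x * indicator K x) \<in> borel_measurable \<Lambda>" unfolding meas_Lambda by measurable
  have e1: "(\<integral>\<^sup>+x. (v x + u x) * indicator K x \<partial>\<Lambda>) = (\<integral>\<^sup>+x. v x * indicator K x \<partial>\<Lambda>) + (\<integral>\<^sup>+x. u x * indicator K x \<partial>\<Lambda>)"
    by (subst nn_integral_add[OF m3 m1, symmetric]) (simp add: distrib_right)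
  have e2: "(\<integral>\<^sup>+x. (v x + u x) * w x * indicator K x \<partial>\<Lambda>) = (\<integral>\<^sup>+x. v x * w x * indicator K x \<partial>\<Lambda>) + (\<integral>\<^sup>+x. u x * w x * indicator K x \<partial>\<Lambda>)"
    by (subst nn_integral_add[OF m4 m2, symmetric]) (simp add: distrib_right)
  show "L (\<lambda>x. v x + u x) = L v + L u" unfolding L_def e1 e2
    by (simp add: distrib_left ac_simps)
next
  fix U :: "nat \<Rightarrow> 'b \<Rightarrow> ennreal" assume U[measurable]: "\<And>i. U i \<in> borel_measurable borel" and inc: "incseq U"
  have inc1: "incseq (\<lambda>i x. U i x * indicator K x)"
    using inc by (auto simp: incseq_def le_fun_def intro: mult_right_mono)
  have inc2: "incseq (\<lambda>i x. U i x * w x * indicator K x)"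
    using inc by (auto simp: incseq_def le_fun_def intro!: mult_right_mono)
  have m1: "(\<lambda>x. U i x * indicator K x) \<in> borel_measurable \<Lambda>" for i unfolding meas_Lambda by measurable
  have m2: "(\<lambda>x. U i x * w x * indicator K x) \<in> borel_measurable \<Lambda>" for i unfolding meas_Lambda by measurable
  have SA: "(SUP i. U i) x = (SUP i. U i x)" for x by (simp only: SUP_apply)
  have e1: "(\<integral>\<^sup>+x. (SUP i. U i) x * indicator K x \<partial>\<Lambda>) = (SUP i. \<integral>\<^sup>+x. U i x * indicator K x \<partial>\<Lambda>)"
    using nn_integral_monotone_convergence_SUP[OF inc1 m1] by (simp only: SA SUP_mult_right_ennreal)
  have e2: "(\<integral>\<^sup>+x. (SUP i. U i) x * w x * indicator K x \<partial>\<Lambda>) = (SUP i. \<integral>\<^sup>+x. U i x * w x * indicator K x \<partial>\<Lambda>)"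
    using nn_integral_monotone_convergence_SUP[OF inc2 m2] by (simp only: SA SUP_mult_right_ennreal)
  have i1: "incseq (\<lambda>i. c * \<integral>\<^sup>+x. U i x * indicator K x \<partial>\<Lambda>)"
    using inc1 by (auto simp: incseq_def le_fun_def intro!: mult_left_mono nn_integral_mono)
  have i2: "incseq (\<lambda>i. \<integral>\<^sup>+x. U i x * w x * indicator K x \<partial>\<Lambda>)"
    using inc2 by (auto simp: incseq_def le_fun_def intro!: nn_integral_mono)
  show "L (SUP i. U i) = (SUP i. L (U i))" unfolding L_def e1 e2
    by (simp add: SUP_mult_left_ennreal ennreal_SUP_add[OF i1 i2])
qed

end

context ppp
begin

lemma int_ind2: "A \<in> sets borel \<Longrightarrow> K \<in> sets borel \<Longrightarrow> (\<integral>\<^sup>+x. indicator A x * indicator K x \<partial>\<Lambda>) = emeasure \<Lambda> (A \<inter> K)"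
  using sets_Lambda by (simp add: indicator_inter_arith[symmetric])

lemma int_ind3: "A \<in> sets borel \<Longrightarrow> B \<in> sets borel \<Longrightarrow> K \<in> sets borel \<Longrightarrow>
   (\<integral>\<^sup>+x. indicator A x * indicator B x * indicator K x \<partial>\<Lambda>) = emeasure \<Lambda> (A \<inter> B \<inter> K)"
  using sets_Lambda by (simp add: indicator_inter_arith[symmetric])

lemma finK: "K \<in> sets borel \<Longrightarrow> emeasure \<Lambda> K < \<infinity> \<Longrightarrow> A \<in> sets borel \<Longrightarrow> emeasure \<Lambda> (A \<inter> K) < \<infinity>"
  using sets_Lambda by (auto intro: le_less_trans[OF emeasure_mono])

lemma campbell1_K:
  assumes K: "K \<in> sets borel" "emeasure \<Lambda> K < \<infinity>" and f: "f \<in> borel_measurable borel"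
  shows "(\<integral>\<^sup>+\<omega>. T (\<lambda>x. f x * indicator K x) \<omega> \<partial>M) = (\<integral>\<^sup>+x. f x * indicator K x \<partial>\<Lambda>)"
proof -
  have one: "(\<lambda>_. 1::ennreal) \<in> borel_measurable M" "(\<lambda>_. 1::ennreal) \<in> borel_measurable borel" by auto
  have "(\<lambda>f. \<integral>\<^sup>+\<omega>. T (\<lambda>x. f x * indicator K x) \<omega> * 1 \<partial>M) f =
        (\<lambda>f. 0 * (\<integral>\<^sup>+x. f x * indicator K x \<partial>\<Lambda>) + (\<integral>\<^sup>+x. f x * 1 * indicator K x \<partial>\<Lambda>)) f"
  proof (rule lin_ext[OF f])
    fix A :: "'b set" assume A: "A \<in> sets borel"
    show "(\<lambda>f. \<integral>\<^sup>+\<omega>. T (\<lambda>x. f x * indicator K x) \<omega> * 1 \<partial>M) (indicator A) =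
        (\<lambda>f. 0 * (\<integral>\<^sup>+x. f x * indicator K x \<partial>\<Lambda>) + (\<integral>\<^sup>+x. f x * 1 * indicator K x \<partial>\<Lambda>)) (indicator A)"
      using A K E_N[of "A \<inter> K"] finK[OF K A] by (simp add: T_indicator int_ind2)
  qed (fact L1_props[OF one(1) K(1)] L2_props[OF one(2) K(1)])+
  then show ?thesis by simp
qed

lemma campbell2_K_base:
  assumes K: "K \<in> sets borel" "emeasure \<Lambda> K < \<infinity>" and A: "A \<in> sets borel" and h: "h \<in> borel_measurable borel"
  shows "(\<integral>\<^sup>+\<omega>. T (\<lambda>x. h x * indicator K x) \<omega> * N (A \<inter> K) \<omega> \<partial>M) =
     emeasure \<Lambda> (A \<inter> K) * (\<integral>\<^sup>+x. h x * indicator K x \<partial>\<Lambda>) + (\<integral>\<^sup>+x. h x * indicator A x * indicator K x \<partial>\<Lambda>)"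
proof -
  have Z: "N (A \<inter> K) \<in> borel_measurable M" using A K by (intro N_meas) auto
  have w: "indicator A \<in> borel_measurable borel" using A by auto
  show ?thesis
  proof (rule lin_ext[where LA="\<lambda>h. \<integral>\<^sup>+\<omega>. T (\<lambda>x. h x * indicator K x) \<omega> * N (A \<inter> K) \<omega> \<partial>M"
        and LB = "\<lambda>h. emeasure \<Lambda> (A \<inter> K) * (\<integral>\<^sup>+x. h x * indicator K x \<partial>\<Lambda>) + (\<integral>\<^sup>+x. h x * indicator A x * indicator K x \<partial>\<Lambda>)", OF h])
    fix B :: "'b set" assume B: "B \<in> sets borel"
    have "(\<integral>\<^sup>+\<omega>. N (B \<inter> K) \<omega> * N (A \<inter> K) \<omega> \<partial>M) = emeasure \<Lambda> (B \<inter> K) * emeasure \<Lambda> (A \<inter> K) + emeasure \<Lambda> ((B \<inter> K) \<inter> (A \<inter> K))"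
      using A B K finK[OF K A] finK[OF K B] by (intro E_NN) auto
    moreover have "(B \<inter> K) \<inter> (A \<inter> K) = B \<inter> A \<inter> K" by auto
    moreover have "(\<integral>\<^sup>+x. indicator B x * indicator A x * indicator K x \<partial>\<Lambda>) = emeasure \<Lambda> (B \<inter> A \<inter> K)"
      using A B K by (intro int_ind3)
    moreover have "(\<integral>\<^sup>+x. indicator B x * indicator K x \<partial>\<Lambda>) = emeasure \<Lambda> (B \<inter> K)"
      using B K by (intro int_ind2)
    ultimately show "(\<integral>\<^sup>+\<omega>. T (\<lambda>x. indicator B x * indicator K x) \<omega> * N (A \<inter> K) \<omega> \<partial>M) =
     emeasure \<Lambda> (A \<inter> K) * (\<integral>\<^sup>+x. indicator B x * indicator K x \<partial>\<Lambda>) + (\<integral>\<^sup>+x. indicator B x * indicator A x * indicator K x \<partial>\<Lambda>)"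
      unfolding T_indicator by (simp only: mult.commute)
  qed (fact L1_props[OF Z K(1)] L2_props[OF w K(1)])+
qed

lemma campbell2_K:
  assumes K: "K \<in> sets borel" "emeasure \<Lambda> K < \<infinity>" and f: "f \<in> borel_measurable borel" and h: "h \<in> borel_measurable borel"
  shows "(\<integral>\<^sup>+\<omega>. T (\<lambda>x. f x * indicator K x) \<omega> * T (\<lambda>x. h x * indicator K x) \<omega> \<partial>M) =
     (\<integral>\<^sup>+x. h x * indicator K x \<partial>\<Lambda>) * (\<integral>\<^sup>+x. f x * indicator K x \<partial>\<Lambda>) + (\<integral>\<^sup>+x. f x * h x * indicator K x \<partial>\<Lambda>)"
proof -
  have hK: "(\<lambda>x. h x * indicator K x) \<in> borel_measurable borel" using h K by measurable
  have Z: "T (\<lambda>x. h x * indicator K x) \<in> borel_measurable M" by (rule T_meas[OF hK])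
  show ?thesis
  proof (rule lin_ext[where LA="\<lambda>f. \<integral>\<^sup>+\<omega>. T (\<lambda>x. f x * indicator K x) \<omega> * T (\<lambda>x. h x * indicator K x) \<omega> \<partial>M"
        and LB = "\<lambda>f. (\<integral>\<^sup>+x. h x * indicator K x \<partial>\<Lambda>) * (\<integral>\<^sup>+x. f x * indicator K x \<partial>\<Lambda>) + (\<integral>\<^sup>+x. f x * h x * indicator K x \<partial>\<Lambda>)", OF f])
    fix A :: "'b set" assume A: "A \<in> sets borel"
    have "(\<integral>\<^sup>+\<omega>. T (\<lambda>x. h x * indicator K x) \<omega> * N (A \<inter> K) \<omega> \<partial>M) =
     emeasure \<Lambda> (A \<inter> K) * (\<integral>\<^sup>+x. h x * indicator K x \<partial>\<Lambda>) + (\<integral>\<^sup>+x. h x * indicator A x * indicator K x \<partial>\<Lambda>)"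
      by (rule campbell2_K_base[OF K A h])
    then show "(\<integral>\<^sup>+\<omega>. T (\<lambda>x. indicator A x * indicator K x) \<omega> * T (\<lambda>x. h x * indicator K x) \<omega> \<partial>M) =
     (\<integral>\<^sup>+x. h x * indicator K x \<partial>\<Lambda>) * (\<integral>\<^sup>+x. indicator A x * indicator K x \<partial>\<Lambda>) + (\<integral>\<^sup>+x. indicator A x * h x * indicator K x \<partial>\<Lambda>)"
      using A K by (simp add: T_indicator int_ind2 mult.commute mult.left_commute)
  qed (fact L1_props[OF Z K(1)] L2_props[OF h K(1)])+
qed

end

lemma SUP_ind:
  fixes f :: "'b \<Rightarrow> ennreal"
  assumes inc: "incseq K" and un: "(\<Union>r. K r) = UNIV"
  shows "(SUP r. f x * indicator (K r) x) = f x"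
proof -
  obtain r0 where r0: "x \<in> K r0" using un by blast
  show ?thesis
  proof (rule antisym)
    show "(SUP r. f x * indicator (K r) x) \<le> f x"
      by (rule SUP_least) (auto simp: indicator_def)
    have "f x = f x * indicator (K r0) x" using r0 by simp
    also have "\<dots> \<le> (SUP r. f x * indicator (K r) x)" by (rule SUP_upper) auto
    finally show "f x \<le> (SUP r. f x * indicator (K r) x)" .
  qed
qed

context ppp
begin

lemma campbell_global:
  fixes K :: "nat \<Rightarrow> 'b set" and f :: "'b \<Rightarrow> ennreal"
  assumes inc: "incseq K" and un: "(\<Union>r. K r) = UNIV"
    and Kb: "\<And>r. K r \<in> sets borel" and Kf: "\<And>r. emeasure \<Lambda> (K r) < \<infinity>"
    and f[measurable]: "f \<in> borel_measurable borel"
  shows "(\<integral>\<^sup>+\<omega>. T f \<omega> \<partial>M) = (\<integral>\<^sup>+x. f x \<partial>\<Lambda>)"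
    and "(\<integral>\<^sup>+\<omega>. T f \<omega> * T f \<omega> \<partial>M) = (\<integral>\<^sup>+x. f x \<partial>\<Lambda>) * (\<integral>\<^sup>+x. f x \<partial>\<Lambda>) + (\<integral>\<^sup>+x. f x * f x \<partial>\<Lambda>)"
proof -
  note [measurable] = Kb
  have incf: "incseq (\<lambda>r x. f x * indicator (K r) x)"
    using inc by (auto simp: incseq_def le_fun_def indicator_def intro!: mult_left_mono)
  have incff: "incseq (\<lambda>r x. f x * f x * indicator (K r) x)"
    using inc by (auto simp: incseq_def le_fun_def indicator_def intro!: mult_left_mono)
  have mr: "(\<lambda>x. f x * indicator (K r) x) \<in> borel_measurable borel" for r by measurable
  have mrL: "(\<lambda>x. f x * indicator (K r) x) \<in> borel_measurable \<Lambda>" for r unfolding meas_Lambda by measurable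
  have mrL2: "(\<lambda>x. f x * f x * indicator (K r) x) \<in> borel_measurable \<Lambda>" for r unfolding meas_Lambda by measurable
  have Tr: "T f \<omega> = (SUP r. T (\<lambda>x. f x * indicator (K r) x) \<omega>)" for \<omega>
  proof -
    have "T f \<omega> = T (\<lambda>x. SUP r. f x * indicator (K r) x) \<omega>" by (simp only: SUP_ind[OF inc un])
    also have "\<dots> = (SUP r. T (\<lambda>x. f x * indicator (K r) x) \<omega>)" by (rule T_SUP[OF incf])
    finally show ?thesis .
  qed
  have incT: "incseq (\<lambda>r. T (\<lambda>x. f x * indicator (K r) x) \<omega>)" for \<omega>
    using incf unfolding incseq_def le_fun_def T_def by (auto intro!: suminf_le)
  have incTf: "incseq (\<lambda>r \<omega>. T (\<lambda>x. f x * indicator (K r) x) \<omega>)"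
    using incT by (auto simp: incseq_def le_fun_def)
  have incTT: "incseq (\<lambda>r \<omega>. T (\<lambda>x. f x * indicator (K r) x) \<omega> * T (\<lambda>x. f x * indicator (K r) x) \<omega>)"
    using incT by (auto simp: incseq_def le_fun_def intro!: mult_mono)
  have LfK: "(\<integral>\<^sup>+x. f x \<partial>\<Lambda>) = (SUP r. \<integral>\<^sup>+x. f x * indicator (K r) x \<partial>\<Lambda>)"
    using nn_integral_monotone_convergence_SUP[OF incf mrL] by (simp only: SUP_ind[OF inc un])
  have LffK: "(\<integral>\<^sup>+x. f x * f x \<partial>\<Lambda>) = (SUP r. \<integral>\<^sup>+x. f x * f x * indicator (K r) x \<partial>\<Lambda>)"
    using nn_integral_monotone_convergence_SUP[OF incff mrL2] by (simp only: SUP_ind[OF inc un, of "\<lambda>x. f x * f x"])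
  have incL1: "incseq (\<lambda>r. \<integral>\<^sup>+x. f x * indicator (K r) x \<partial>\<Lambda>)"
    using incf by (auto simp: incseq_def le_fun_def intro!: nn_integral_mono)
  have incL2: "incseq (\<lambda>r. \<integral>\<^sup>+x. f x * f x * indicator (K r) x \<partial>\<Lambda>)"
    using incff by (auto simp: incseq_def le_fun_def intro!: nn_integral_mono)
  have incL3: "incseq (\<lambda>r. (\<integral>\<^sup>+x. f x * indicator (K r) x \<partial>\<Lambda>) * (\<integral>\<^sup>+x. f x * indicator (K r) x \<partial>\<Lambda>))"
    using incL1 by (auto simp: incseq_def intro!: mult_mono)
  have "(\<integral>\<^sup>+\<omega>. T f \<omega> \<partial>M) = (\<integral>\<^sup>+\<omega>. (SUP r. T (\<lambda>x. f x * indicator (K r) x) \<omega>) \<partial>M)"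
    by (simp only: Tr)
  also have "\<dots> = (SUP r. \<integral>\<^sup>+\<omega>. T (\<lambda>x. f x * indicator (K r) x) \<omega> \<partial>M)"
    by (rule nn_integral_monotone_convergence_SUP[OF incTf T_meas[OF mr]])
  also have "\<dots> = (SUP r. \<integral>\<^sup>+x. f x * indicator (K r) x \<partial>\<Lambda>)"
    by (simp add: campbell1_K[OF Kb Kf f])
  finally show "(\<integral>\<^sup>+\<omega>. T f \<omega> \<partial>M) = (\<integral>\<^sup>+x. f x \<partial>\<Lambda>)" using LfK by simp
  have "(\<integral>\<^sup>+\<omega>. T f \<omega> * T f \<omega> \<partial>M) = (\<integral>\<^sup>+\<omega>. (SUP r. T (\<lambda>x. f x * indicator (K r) x) \<omega> * T (\<lambda>x. f x * indicator (K r) x) \<omega>) \<partial>M)"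
    by (simp only: Tr SUP_mult_incseq[OF incT incT])
  also have "\<dots> = (SUP r. \<integral>\<^sup>+\<omega>. T (\<lambda>x. f x * indicator (K r) x) \<omega> * T (\<lambda>x. f x * indicator (K r) x) \<omega> \<partial>M)"
    by (rule nn_integral_monotone_convergence_SUP[OF incTT]) (use T_meas[OF mr] in measurable)
  also have "\<dots> = (SUP r. (\<integral>\<^sup>+x. f x * indicator (K r) x \<partial>\<Lambda>) * (\<integral>\<^sup>+x. f x * indicator (K r) x \<partial>\<Lambda>)
         + (\<integral>\<^sup>+x. f x * f x * indicator (K r) x \<partial>\<Lambda>))"
    by (simp add: campbell2_K[OF Kb Kf f f])
  also have "\<dots> = (\<integral>\<^sup>+x. f x \<partial>\<Lambda>) * (\<integral>\<^sup>+x. f x \<partial>\<Lambda>) + (\<integral>\<^sup>+x. f x * f x \<partial>\<Lambda>)"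
    unfolding LfK LffK by (simp add: ennreal_SUP_add[OF incL3 incL2] SUP_mult_incseq[OF incL1 incL1])
  finally show "(\<integral>\<^sup>+\<omega>. T f \<omega> * T f \<omega> \<partial>M) = (\<integral>\<^sup>+x. f x \<partial>\<Lambda>) * (\<integral>\<^sup>+x. f x \<partial>\<Lambda>) + (\<integral>\<^sup>+x. f x * f x \<partial>\<Lambda>)" .
qed

end

lemma tail_finite:
  fixes p G :: "real \<Rightarrow> real" and \<alpha> :: real
  assumes p_meas: "p \<in> borel_measurable borel" and p_nonneg: "\<And>t. p t \<ge> 0"
    and p_growth: "\<exists>\<epsilon>>0. p \<in> O(\<lambda>t. t powr (\<alpha> - 1 - \<epsilon>))"
    and G_meas: "G \<in> borel_measurable borel"
    and G_nonneg: "\<And>t. t \<ge> 0 \<Longrightarrow> G t \<ge> 0"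
    and G_mono: "\<And>s t. 0 \<le> s \<Longrightarrow> s \<le> t \<Longrightarrow> G t \<le> G s"
    and G_decay: "G \<in> O(\<lambda>t. t powr (- \<alpha>))"
    and loc: "\<And>R. (\<integral>\<^sup>+t. ennreal (p t) * indicator {0..R} t \<partial>lborel) < \<infinity>"
  shows "(\<integral>\<^sup>+t. ennreal (G t * p t) * indicator {0..} t \<partial>lborel) < \<infinity>"
proof -
  note [measurable] = p_meas G_meas
  obtain \<epsilon> where \<epsilon>: "\<epsilon> > 0" and pO: "p \<in> O(\<lambda>t. t powr (\<alpha> - 1 - \<epsilon>))" using p_growth by blast
  obtain c1 where c1: "c1 > 0" and ev1: "eventually (\<lambda>t. norm (p t) \<le> c1 * norm (t powr (\<alpha> - 1 - \<epsilon>))) at_top"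
    using pO by (elim landau_o.bigE)
  obtain c2 where c2: "c2 > 0" and ev2: "eventually (\<lambda>t. norm (G t) \<le> c2 * norm (t powr (- \<alpha>))) at_top"
    using G_decay by (elim landau_o.bigE)
  from eventually_conj[OF ev1 ev2] obtain R0 where
    R0: "\<And>t. t \<ge> R0 \<Longrightarrow> norm (p t) \<le> c1 * norm (t powr (\<alpha> - 1 - \<epsilon>)) \<and> norm (G t) \<le> c2 * norm (t powr (- \<alpha>))"
    unfolding eventually_at_top_linorder by blast
  define R where "R = max R0 1"
  have R1: "R \<ge> 1" by (simp add: R_def)
  have bound: "G t * p t \<le> c1 * c2 * t powr (-1 - \<epsilon>)" if t: "t \<ge> R" for t
  proof -
    have t0: "t > 0" using t R1 by simp
    have "t \<ge> R0" using t by (simp add: R_def)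
    from R0[OF this] have b1: "p t \<le> c1 * t powr (\<alpha> - 1 - \<epsilon>)" and b2: "G t \<le> c2 * t powr (- \<alpha>)"
      using p_nonneg[of t] G_nonneg[of t] t0 by auto
    have "G t * p t \<le> (c2 * t powr (- \<alpha>)) * (c1 * t powr (\<alpha> - 1 - \<epsilon>))"
      using b1 b2 p_nonneg[of t] G_nonneg[of t] t0 by (intro mult_mono) auto
    also have "\<dots> = c1 * c2 * (t powr (- \<alpha>) * t powr (\<alpha> - 1 - \<epsilon>))" by simp
    also have "t powr (- \<alpha>) * t powr (\<alpha> - 1 - \<epsilon>) = t powr (-1 - \<epsilon>)"
      using t0 by (simp add: powr_add[symmetric])
    finally show ?thesis .
  qed
  have "(\<integral>\<^sup>+t. ennreal (G t * p t) * indicator {0..} t \<partial>lborel) \<le>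
        (\<integral>\<^sup>+t. ennreal (G 0) * (ennreal (p t) * indicator {0..R} t) + ennreal (c1 * c2 * t powr (-1 - \<epsilon>)) * indicator {R..} t \<partial>lborel)"
  proof (rule nn_integral_mono)
    fix t
    show "ennreal (G t * p t) * indicator {0..} t \<le> ennreal (G 0) * (ennreal (p t) * indicator {0..R} t) + ennreal (c1 * c2 * t powr (-1 - \<epsilon>)) * indicator {R..} t"
    proof (cases "t \<ge> 0")
      case False then show ?thesis by simp
    next
      case True
      show ?thesis
      proof (cases "t \<le> R")
        case True2: True
        have "G t * p t \<le> G 0 * p t" using G_mono[of 0 t] True p_nonneg[of t] by (intro mult_right_mono) auto
        then have "ennreal (G t * p t) \<le> ennreal (G 0) * ennreal (p t)"
          using G_nonneg[of 0] by (simp add: ennreal_mult[symmetric] p_nonneg)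
        then show ?thesis using True True2 by (simp add: add_increasing2)
      next
        case False
        then have "ennreal (G t * p t) \<le> ennreal (c1 * c2 * t powr (-1 - \<epsilon>))" using bound[of t] by (intro ennreal_leI) auto
        then show ?thesis using True False by (simp add: add_increasing)
      qed
    qed
  qed
  also have "\<dots> = ennreal (G 0) * (\<integral>\<^sup>+t. ennreal (p t) * indicator {0..R} t \<partial>lborel) + (\<integral>\<^sup>+t. ennreal (c1 * c2 * t powr (-1 - \<epsilon>)) * indicator {R..} t \<partial>lborel)"
    by (subst nn_integral_add) (auto simp: nn_integral_cmult)
  also have "(\<integral>\<^sup>+t. ennreal (c1 * c2 * t powr (-1 - \<epsilon>)) * indicator {R..} t \<partial>lborel) = ennreal (c1 * c2 * (-(R powr (-1 - \<epsilon> + 1)) / (-1 - \<epsilon> + 1)))"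
  proof (rule nn_integral_has_integral_lebesgue')
    show "((\<lambda>t. c1 * c2 * t powr (-1 - \<epsilon>)) has_integral c1 * c2 * (-(R powr (-1 - \<epsilon> + 1)) / (-1 - \<epsilon> + 1))) {R..}"
      using has_integral_powr_to_inf[of "-1 - \<epsilon>" R] \<epsilon> R1 by (intro has_integral_mult_right) auto
  qed (use c1 c2 in auto)
  also have "ennreal (G 0) * (\<integral>\<^sup>+t. ennreal (p t) * indicator {0..R} t \<partial>lborel) + ennreal (c1 * c2 * (-(R powr (-1 - \<epsilon> + 1)) / (-1 - \<epsilon> + 1))) < \<infinity>"
    using loc[of R] by (simp add: ennreal_mult_less_top)
  finally show ?thesis .
qed

lemma suminf_split_one:
  fixes f :: "nat \<Rightarrow> ennreal"
  shows "(\<Sum>j. f j) = f k + (\<Sum>j. if j = k then 0 else f j)"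
proof -
  have "(\<Sum>j. f j) = (\<Sum>j. (if j = k then f k else 0) + (if j = k then 0 else f j))"
    by (intro suminf_cong) auto
  also have "\<dots> = (\<Sum>j. if j = k then f k else 0) + (\<Sum>j. if j = k then 0 else f j)"
    by (rule suminf_add[symmetric]) auto
  also have "(\<Sum>j. if j = k then f k else 0) = f k"
  proof -
    have "(\<Sum>j. if j = k then f k else 0) = (\<Sum>j\<in>{k}. if j = k then f k else 0)"
      by (rule suminf_finite) auto
    then show ?thesis by simp
  qed
  finally show ?thesis .
qed

lemma suminf_mult_suminf:
  fixes a b :: "nat \<Rightarrow> ennreal"
  shows "(\<Sum>k. a k) * (\<Sum>j. b j) = (\<Sum>k. \<Sum>j. a k * b j)"
proof -
  have "(\<Sum>k. \<Sum>j. a k * b j) = (\<Sum>k. a k * (\<Sum>j. b j))" by (simp only: ennreal_suminf_cmult)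
  also have "\<dots> = (\<Sum>k. (\<Sum>j. b j) * a k)" by (simp only: mult.commute)
  also have "\<dots> = (\<Sum>j. b j) * (\<Sum>k. a k)" by (rule ennreal_suminf_cmult)
  finally show ?thesis by (simp only: mult.commute)
qed

context ppp
begin

lemma marked_moments:
  fixes H :: "nat \<Rightarrow> 'w \<Rightarrow> real" and g :: "'b \<Rightarrow> ennreal" and K :: "nat \<Rightarrow> 'b set"
  assumes inc: "incseq K" and un: "(\<Union>r. K r) = UNIV"
    and Kb: "\<And>r. K r \<in> sets borel" and Kf: "\<And>r. emeasure \<Lambda> (K r) < \<infinity>"
    and g[measurable]: "g \<in> borel_measurable borel"
    and Hind: "indep_vars (\<lambda>_. borel) H UNIV"
    and HX: "indep_rvs M (PiM UNIV (\<lambda>_. borel)) (\<lambda>\<omega> k. X k \<omega>) (PiM UNIV (\<lambda>_. borel)) (\<lambda>\<omega> k. H k \<omega>)"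
    and m1: "\<And>k. (\<integral>\<^sup>+\<omega>. ennreal (H k \<omega>) \<partial>M) = m1"
    and m2: "\<And>k. (\<integral>\<^sup>+\<omega>. ennreal (H k \<omega>) * ennreal (H k \<omega>) \<partial>M) = m2"
    and fin: "(\<integral>\<^sup>+x. g x * g x \<partial>\<Lambda>) < \<infinity>"
  defines "W \<equiv> (\<lambda>\<omega>. \<Sum>k. ennreal (H k \<omega>) * g (X k \<omega>))"
  shows "(\<integral>\<^sup>+\<omega>. W \<omega> \<partial>M) = m1 * (\<integral>\<^sup>+x. g x \<partial>\<Lambda>)"
    and "(\<integral>\<^sup>+\<omega>. W \<omega> * W \<omega> \<partial>M) = m2 * (\<integral>\<^sup>+x. g x * g x \<partial>\<Lambda>) + m1 * m1 * ((\<integral>\<^sup>+x. g x \<partial>\<Lambda>) * (\<integral>\<^sup>+x. g x \<partial>\<Lambda>))"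
proof -
  have Hm[measurable]: "H k \<in> borel_measurable M" for k
    using Hind unfolding indep_vars_def by auto
  have gk[measurable]: "(\<lambda>\<omega>. g (X k \<omega>)) \<in> borel_measurable M" for k by measurable
  have gg: "(\<lambda>x. g x * g x) \<in> borel_measurable borel" by measurable
  have cg1: "(\<integral>\<^sup>+\<omega>. T g \<omega> \<partial>M) = (\<integral>\<^sup>+x. g x \<partial>\<Lambda>)"
    by (rule campbell_global(1)[OF inc un Kb Kf g])
  have cg2: "(\<integral>\<^sup>+\<omega>. T g \<omega> * T g \<omega> \<partial>M) = (\<integral>\<^sup>+x. g x \<partial>\<Lambda>) * (\<integral>\<^sup>+x. g x \<partial>\<Lambda>) + (\<integral>\<^sup>+x. g x * g x \<partial>\<Lambda>)"
    by (rule campbell_global(2)[OF inc un Kb Kf g])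
  have cgg: "(\<integral>\<^sup>+\<omega>. T (\<lambda>x. g x * g x) \<omega> \<partial>M) = (\<integral>\<^sup>+x. g x * g x \<partial>\<Lambda>)"
    by (rule campbell_global(1)[OF inc un Kb Kf gg])
  have ind1: "(\<integral>\<^sup>+\<omega>. g (X k \<omega>) * ennreal (H k \<omega>) \<partial>M) = (\<integral>\<^sup>+\<omega>. g (X k \<omega>) \<partial>M) * m1" for k
  proof -
    have "prob_space.indep_var M borel (\<lambda>\<omega>. (\<lambda>x. g (x k)) (\<lambda>k. X k \<omega>)) borel (\<lambda>\<omega>. (\<lambda>h. ennreal (h k)) (\<lambda>k. H k \<omega>))"
      by (rule indep_rvs_var[OF Mprob HX]) measurable
    then show ?thesis using indep_var_nn[OF Mprob] m1 by simp
  qed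
  have ind2: "(\<integral>\<^sup>+\<omega>. (g (X k \<omega>) * g (X j \<omega>)) * (ennreal (H k \<omega>) * ennreal (H j \<omega>)) \<partial>M) =
      (\<integral>\<^sup>+\<omega>. g (X k \<omega>) * g (X j \<omega>) \<partial>M) * (if k = j then m2 else m1 * m1)" for k j
  proof -
    have "prob_space.indep_var M borel (\<lambda>\<omega>. (\<lambda>x. g (x k) * g (x j)) (\<lambda>k. X k \<omega>)) borel (\<lambda>\<omega>. (\<lambda>h. ennreal (h k) * ennreal (h j)) (\<lambda>k. H k \<omega>))"
      by (rule indep_rvs_var[OF Mprob HX]) measurable
    then have "(\<integral>\<^sup>+\<omega>. (g (X k \<omega>) * g (X j \<omega>)) * (ennreal (H k \<omega>) * ennreal (H j \<omega>)) \<partial>M) =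
      (\<integral>\<^sup>+\<omega>. g (X k \<omega>) * g (X j \<omega>) \<partial>M) * (\<integral>\<^sup>+\<omega>. ennreal (H k \<omega>) * ennreal (H j \<omega>) \<partial>M)"
      using indep_var_nn[OF Mprob] by simp
    moreover have "(\<integral>\<^sup>+\<omega>. ennreal (H k \<omega>) * ennreal (H j \<omega>) \<partial>M) = (if k = j then m2 else m1 * m1)"
    proof (cases "k = j")
      case True then show ?thesis using m2 by simp
    next
      case False
      have "(\<integral>\<^sup>+\<omega>. ennreal (H k \<omega>) * ennreal (H j \<omega>) \<partial>M) = (\<integral>\<^sup>+\<omega>. ennreal (H k \<omega>) \<partial>M) * (\<integral>\<^sup>+\<omega>. ennreal (H j \<omega>) \<partial>M)"
        by (rule indep_vars_pair_nn[OF Mprob Hind, of k j ennreal ennreal]) (use False in auto)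
      then show ?thesis using False m1 by simp
    qed
    ultimately show ?thesis by simp
  qed
  have "(\<integral>\<^sup>+\<omega>. W \<omega> \<partial>M) = (\<Sum>k. \<integral>\<^sup>+\<omega>. ennreal (H k \<omega>) * g (X k \<omega>) \<partial>M)"
    unfolding W_def by (rule nn_integral_suminf) measurable
  also have "\<dots> = (\<Sum>k. m1 * (\<integral>\<^sup>+\<omega>. g (X k \<omega>) \<partial>M))"
    using ind1 by (simp add: mult.commute)
  also have "\<dots> = m1 * (\<Sum>k. \<integral>\<^sup>+\<omega>. g (X k \<omega>) \<partial>M)" by simp
  also have "(\<Sum>k. \<integral>\<^sup>+\<omega>. g (X k \<omega>) \<partial>M) = (\<integral>\<^sup>+\<omega>. T g \<omega> \<partial>M)"
    unfolding T_def by (rule nn_integral_suminf[symmetric]) measurable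
  finally show "(\<integral>\<^sup>+\<omega>. W \<omega> \<partial>M) = m1 * (\<integral>\<^sup>+x. g x \<partial>\<Lambda>)" using cg1 by simp
  define a where "a k j = (\<integral>\<^sup>+\<omega>. g (X k \<omega>) * g (X j \<omega>) \<partial>M)" for k j
  define Off where "Off k = (\<Sum>j. if j = k then 0 else a k j)" for k
  have WW: "W \<omega> * W \<omega> = (\<Sum>k. \<Sum>j. (g (X k \<omega>) * g (X j \<omega>)) * (ennreal (H k \<omega>) * ennreal (H j \<omega>)))" for \<omega>
    unfolding W_def suminf_mult_suminf by (intro suminf_cong) (simp only: mult.assoc mult.commute mult.left_commute)
  have "(\<integral>\<^sup>+\<omega>. W \<omega> * W \<omega> \<partial>M) = (\<Sum>k. \<integral>\<^sup>+\<omega>. (\<Sum>j. (g (X k \<omega>) * g (X j \<omega>)) * (ennreal (H k \<omega>) * ennreal (H j \<omega>))) \<partial>M)"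
    unfolding WW by (rule nn_integral_suminf) measurable
  also have "\<dots> = (\<Sum>k. \<Sum>j. \<integral>\<^sup>+\<omega>. (g (X k \<omega>) * g (X j \<omega>)) * (ennreal (H k \<omega>) * ennreal (H j \<omega>)) \<partial>M)"
    by (intro suminf_cong nn_integral_suminf) measurable
  also have "\<dots> = (\<Sum>k. \<Sum>j. a k j * (if k = j then m2 else m1 * m1))"
    unfolding a_def ind2 ..
  also have "\<dots> = (\<Sum>k. m2 * a k k + m1 * m1 * Off k)"
  proof (intro suminf_cong)
    fix k
    have "(\<Sum>j. a k j * (if k = j then m2 else m1 * m1)) = a k k * m2 + (\<Sum>j. if j = k then 0 else a k j * (if k = j then m2 else m1 * m1))"
      by (subst suminf_split_one[where k=k]) simp
    also have "(\<Sum>j. if j = k then 0 else a k j * (if k = j then m2 else m1 * m1)) = (\<Sum>j. m1 * m1 * (if j = k then 0 else a k j))"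
      by (intro suminf_cong) (auto simp: mult.commute)
    also have "\<dots> = m1 * m1 * Off k" unfolding Off_def by simp
    finally show "(\<Sum>j. a k j * (if k = j then m2 else m1 * m1)) = m2 * a k k + m1 * m1 * Off k"
      by (simp add: mult.commute)
  qed
  also have "\<dots> = m2 * (\<Sum>k. a k k) + m1 * m1 * (\<Sum>k. Off k)"
    by (subst suminf_add[symmetric]) auto
  finally have E2: "(\<integral>\<^sup>+\<omega>. W \<omega> * W \<omega> \<partial>M) = m2 * (\<Sum>k. a k k) + m1 * m1 * (\<Sum>k. Off k)" .
  have D: "(\<Sum>k. a k k) = (\<integral>\<^sup>+x. g x * g x \<partial>\<Lambda>)"
  proof -
    have "(\<Sum>k. a k k) = (\<integral>\<^sup>+\<omega>. T (\<lambda>x. g x * g x) \<omega> \<partial>M)"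
      unfolding a_def T_def by (rule nn_integral_suminf[symmetric]) measurable
    then show ?thesis using cgg by simp
  qed
  have TT: "T g \<omega> * T g \<omega> = (\<Sum>k. \<Sum>j. g (X k \<omega>) * g (X j \<omega>))" for \<omega>
    unfolding T_def suminf_mult_suminf ..
  have "(\<integral>\<^sup>+\<omega>. T g \<omega> * T g \<omega> \<partial>M) = (\<Sum>k. \<Sum>j. a k j)"
  proof -
    have "(\<integral>\<^sup>+\<omega>. T g \<omega> * T g \<omega> \<partial>M) = (\<Sum>k. \<integral>\<^sup>+\<omega>. (\<Sum>j. g (X k \<omega>) * g (X j \<omega>)) \<partial>M)"
      unfolding TT by (rule nn_integral_suminf) measurable
    also have "\<dots> = (\<Sum>k. \<Sum>j. a k j)" unfolding a_def
      by (intro suminf_cong nn_integral_suminf) measurable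
    finally show ?thesis .
  qed
  also have "\<dots> = (\<Sum>k. a k k + Off k)" unfolding Off_def by (intro suminf_cong suminf_split_one)
  also have "\<dots> = (\<Sum>k. a k k) + (\<Sum>k. Off k)" by (rule suminf_add[symmetric]) auto
  finally have X: "(\<integral>\<^sup>+\<omega>. T g \<omega> * T g \<omega> \<partial>M) = (\<Sum>k. a k k) + (\<Sum>k. Off k)" .
  have "(\<integral>\<^sup>+x. g x * g x \<partial>\<Lambda>) + (\<Sum>k. Off k) = (\<integral>\<^sup>+x. g x * g x \<partial>\<Lambda>) + (\<integral>\<^sup>+x. g x \<partial>\<Lambda>) * (\<integral>\<^sup>+x. g x \<partial>\<Lambda>)"
    using X cg2 D by (simp only: add.commute)
  then have "(\<Sum>k. Off k) = (\<integral>\<^sup>+x. g x \<partial>\<Lambda>) * (\<integral>\<^sup>+x. g x \<partial>\<Lambda>)"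
    using fin by (auto simp: ennreal_add_left_cancel)
  then show "(\<integral>\<^sup>+\<omega>. W \<omega> * W \<omega> \<partial>M) = m2 * (\<integral>\<^sup>+x. g x * g x \<partial>\<Lambda>) + m1 * m1 * ((\<integral>\<^sup>+x. g x \<partial>\<Lambda>) * (\<integral>\<^sup>+x. g x \<partial>\<Lambda>))"
    using E2 D by simp
qed

end

lemma mom_to_var:
  fixes Y :: "'w \<Rightarrow> real"
  assumes M: "prob_space M" and Y[measurable]: "Y \<in> borel_measurable M" and nn: "AE \<omega> in M. Y \<omega> \<ge> 0"
    and m1: "(\<integral>\<^sup>+\<omega>. ennreal (Y \<omega>) \<partial>M) = ennreal a" and m2: "(\<integral>\<^sup>+\<omega>. ennreal ((Y \<omega>)^2) \<partial>M) = ennreal b"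
    and a: "a \<ge> 0" and b: "b \<ge> 0"
  shows "integral\<^sup>L M Y = a" and "integral\<^sup>L M (\<lambda>\<omega>. (Y \<omega> - integral\<^sup>L M Y)^2) = b - a^2"
proof -
  interpret prob_space M by (rule M)
  have iY: "integrable M Y" by (rule integrableI_nonneg) (use nn m1 in auto)
  have iY2: "integrable M (\<lambda>\<omega>. (Y \<omega>)^2)" by (rule integrableI_nonneg) (use m2 in auto)
  show EY: "integral\<^sup>L M Y = a"
    using integral_eq_nn_integral[OF Y nn] m1 a by simp
  have EY2: "integral\<^sup>L M (\<lambda>\<omega>. (Y \<omega>)^2) = b"
    using integral_eq_nn_integral[of "\<lambda>\<omega>. (Y \<omega>)^2" M] m2 b by simp
  have "(\<lambda>\<omega>. (Y \<omega> - a)^2) = (\<lambda>\<omega>. ((Y \<omega>)^2 - 2 * a * Y \<omega>) + a^2)"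
    by (rule ext) (simp add: power2_eq_square algebra_simps)
  then have "integral\<^sup>L M (\<lambda>\<omega>. (Y \<omega> - a)^2) = integral\<^sup>L M (\<lambda>\<omega>. ((Y \<omega>)^2 - 2 * a * Y \<omega>) + a^2)" by simp
  also have "\<dots> = integral\<^sup>L M (\<lambda>\<omega>. (Y \<omega>)^2 - 2 * a * Y \<omega>) + a^2"
  proof -
    have iD: "integrable M (\<lambda>\<omega>. (Y \<omega>)^2 - 2 * a * Y \<omega>)"
      by (intro Bochner_Integration.integrable_diff iY2 integrable_mult_right iY)
    show ?thesis using Bochner_Integration.integral_add[OF iD integrable_const[of "a^2"]] by (simp add: prob_space)
  qed
  also have "integral\<^sup>L M (\<lambda>\<omega>. (Y \<omega>)^2 - 2 * a * Y \<omega>) = b - 2 * a * a"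
    using iY iY2 EY EY2 by (subst Bochner_Integration.integral_diff) auto
  finally show "integral\<^sup>L M (\<lambda>\<omega>. (Y \<omega> - integral\<^sup>L M Y)^2) = b - a^2"
    using EY by (simp add: power2_eq_square)
qed

lemma ennreal_PHG: "P \<ge> 0 \<Longrightarrow> g \<ge> 0 \<Longrightarrow> ennreal (P * h * g) = ennreal P * (ennreal h * ennreal g)"
proof (cases "h \<ge> 0")
  case True
  assume "P \<ge> 0" "g \<ge> 0"
  then show ?thesis using True by (simp add: ennreal_mult mult.assoc)
next
  case False
  assume P: "P \<ge> 0" and g: "g \<ge> 0"
  have "P * h * g \<le> 0" using P g False
    by (intro mult_nonpos_nonneg mult_nonneg_nonpos) auto
  then show ?thesis using False by (simp add: ennreal_eq_0_iff ennreal_neg)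
qed

lemma sum_if_eq:
  fixes A B :: ennreal
  assumes "finite S" "k \<in> S"
  shows "(\<Sum>j\<in>S. if k = j then A else B) = A + of_nat (card S - 1) * B"
proof -
  have "(\<Sum>j\<in>S. if k = j then A else B) = (if k = k then A else B) + (\<Sum>j\<in>S - {k}. if k = j then A else B)"
    using assms by (rule sum.remove)
  also have "(\<Sum>j\<in>S - {k}. if k = j then A else B) = (\<Sum>j\<in>S - {k}. B)" by (intro sum.cong) auto
  also have "\<dots> = of_nat (card S - 1) * B" using assms by simp
  finally show ?thesis by simp
qed

lemma In_moments:
  fixes H U :: "nat \<Rightarrow> 'w \<Rightarrow> real" and G :: "real \<Rightarrow> real" and S :: "nat set"
  assumes M: "prob_space M" and P: "P > 0" and S: "finite S"
    and G_meas[measurable]: "G \<in> borel_measurable borel" and G_nonneg: "\<And>t. t \<ge> 0 \<Longrightarrow> G t \<ge> 0"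
    and H_nonneg: "\<And>k. AE \<omega> in M. H k \<omega> \<ge> 0"
    and Hind: "prob_space.indep_vars M (\<lambda>_. borel) H UNIV"
    and m1: "\<And>k. (\<integral>\<^sup>+\<omega>. ennreal (H k \<omega>) \<partial>M) = m1"
    and m2: "\<And>k. (\<integral>\<^sup>+\<omega>. ennreal (H k \<omega>) * ennreal (H k \<omega>) \<partial>M) = m2"
    and Uind: "prob_space.indep_vars M (\<lambda>_. borel) U S"
    and U_nonneg: "AE \<omega> in M. \<forall>k\<in>S. U k \<omega> \<ge> 0"
    and c1: "\<And>k. k \<in> S \<Longrightarrow> (\<integral>\<^sup>+\<omega>. ennreal (G (U k \<omega>)) \<partial>M) = c1"
    and c2: "\<And>k. k \<in> S \<Longrightarrow> (\<integral>\<^sup>+\<omega>. ennreal (G (U k \<omega>)) * ennreal (G (U k \<omega>)) \<partial>M) = c2"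
    and UH: "indep_rvs M (PiM S (\<lambda>_. borel)) (\<lambda>\<omega>. \<lambda>k\<in>S. U k \<omega>) (PiM UNIV (\<lambda>_. borel)) (\<lambda>\<omega> k. H k \<omega>)"
  defines "Y \<equiv> (\<lambda>\<omega>. \<Sum>k\<in>S. P * H k \<omega> * G (U k \<omega>))"
  shows "(\<integral>\<^sup>+\<omega>. ennreal (Y \<omega>) \<partial>M) = ennreal P * (of_nat (card S) * (m1 * c1))"
    and "(\<integral>\<^sup>+\<omega>. ennreal ((Y \<omega>)^2) \<partial>M) = ennreal P * ennreal P *
           (of_nat (card S) * (m2 * c2 + of_nat (card S - 1) * (m1 * m1 * (c1 * c1))))"
proof -
  interpret prob_space M by (rule M)
  have Hm[measurable]: "H k \<in> borel_measurable M" for k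
    using Hind unfolding indep_vars_def by auto
  have Um[measurable]: "k \<in> S \<Longrightarrow> U k \<in> borel_measurable M" for k
    using Uind unfolding indep_vars_def by auto
  define a where "a k \<omega> = ennreal P * (ennreal (H k \<omega>) * ennreal (G (U k \<omega>)))" for k \<omega>
  have am[measurable]: "k \<in> S \<Longrightarrow> a k \<in> borel_measurable M" for k unfolding a_def by measurable
  have AEH: "AE \<omega> in M. \<forall>k. H k \<omega> \<ge> 0" using H_nonneg by (simp add: AE_all_countable)
  have AEY: "AE \<omega> in M. ennreal (Y \<omega>) = (\<Sum>k\<in>S. a k \<omega>)"
    using AEH U_nonneg
  proof eventually_elim
    case (elim \<omega>)
    have "ennreal (Y \<omega>) = (\<Sum>k\<in>S. ennreal (P * H k \<omega> * G (U k \<omega>)))"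
      unfolding Y_def using elim P G_nonneg
      by (subst sum_ennreal) (auto intro!: mult_nonneg_nonneg)
    also have "\<dots> = (\<Sum>k\<in>S. a k \<omega>)" unfolding a_def using elim P G_nonneg
      by (intro sum.cong refl ennreal_PHG) auto
    finally show ?case .
  qed
  have indHG: "(\<integral>\<^sup>+\<omega>. (ennreal (G (U k \<omega>)) * ennreal (G (U j \<omega>))) * (ennreal (H k \<omega>) * ennreal (H j \<omega>)) \<partial>M) =
      (\<integral>\<^sup>+\<omega>. ennreal (G (U k \<omega>)) * ennreal (G (U j \<omega>)) \<partial>M) * (\<integral>\<^sup>+\<omega>. ennreal (H k \<omega>) * ennreal (H j \<omega>) \<partial>M)"
    if kj: "k \<in> S" "j \<in> S" for k j
  proof -
    have "prob_space.indep_var M borel (\<lambda>\<omega>. (\<lambda>u. ennreal (G (u k)) * ennreal (G (u j))) (\<lambda>k\<in>S. U k \<omega>))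
       borel (\<lambda>\<omega>. (\<lambda>h. ennreal (h k) * ennreal (h j)) (\<lambda>k. H k \<omega>))"
      by (rule indep_rvs_var[OF M UH]) (use kj in measurable)
    then show ?thesis using kj indep_var_nn[OF M] by simp
  qed
  have indH1: "(\<integral>\<^sup>+\<omega>. ennreal (G (U k \<omega>)) * ennreal (H k \<omega>) \<partial>M) = c1 * m1" if k: "k \<in> S" for k
  proof -
    have "prob_space.indep_var M borel (\<lambda>\<omega>. (\<lambda>u. ennreal (G (u k))) (\<lambda>k\<in>S. U k \<omega>))
       borel (\<lambda>\<omega>. (\<lambda>h. ennreal (h k)) (\<lambda>k. H k \<omega>))"
      by (rule indep_rvs_var[OF M UH]) (use k in measurable)
    then show ?thesis using k indep_var_nn[OF M] c1 m1 by simp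
  qed
  have EHH: "(\<integral>\<^sup>+\<omega>. ennreal (H k \<omega>) * ennreal (H j \<omega>) \<partial>M) = (if k = j then m2 else m1 * m1)" for k j
  proof (cases "k = j")
    case True then show ?thesis using m2 by simp
  next
    case False
    have "(\<integral>\<^sup>+\<omega>. ennreal (H k \<omega>) * ennreal (H j \<omega>) \<partial>M) = (\<integral>\<^sup>+\<omega>. ennreal (H k \<omega>) \<partial>M) * (\<integral>\<^sup>+\<omega>. ennreal (H j \<omega>) \<partial>M)"
      by (rule indep_vars_pair_nn[OF M Hind, of k j ennreal ennreal]) (use False in auto)
    then show ?thesis using False m1 by simp
  qed
  have EGG: "(\<integral>\<^sup>+\<omega>. ennreal (G (U k \<omega>)) * ennreal (G (U j \<omega>)) \<partial>M) = (if k = j then c2 else c1 * c1)"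
    if kj: "k \<in> S" "j \<in> S" for k j
  proof (cases "k = j")
    case True then show ?thesis using c2 kj by simp
  next
    case False
    have "(\<integral>\<^sup>+\<omega>. (\<lambda>x. ennreal (G x)) (U k \<omega>) * (\<lambda>x. ennreal (G x)) (U j \<omega>) \<partial>M) =
       (\<integral>\<^sup>+\<omega>. (\<lambda>x. ennreal (G x)) (U k \<omega>) \<partial>M) * (\<integral>\<^sup>+\<omega>. (\<lambda>x. ennreal (G x)) (U j \<omega>) \<partial>M)"
      by (rule indep_vars_pair_nn[OF M Uind]) (use False kj in auto)
    then show ?thesis using False c1 kj by simp
  qed
  have "(\<integral>\<^sup>+\<omega>. ennreal (Y \<omega>) \<partial>M) = (\<integral>\<^sup>+\<omega>. (\<Sum>k\<in>S. a k \<omega>) \<partial>M)"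
    by (rule nn_integral_cong_AE[OF AEY])
  also have "\<dots> = (\<Sum>k\<in>S. \<integral>\<^sup>+\<omega>. a k \<omega> \<partial>M)" by (rule nn_integral_sum) auto
  also have "\<dots> = (\<Sum>k\<in>S. ennreal P * (m1 * c1))"
  proof (intro sum.cong refl)
    fix k assume k: "k \<in> S"
    have "(\<integral>\<^sup>+\<omega>. a k \<omega> \<partial>M) = ennreal P * (\<integral>\<^sup>+\<omega>. ennreal (G (U k \<omega>)) * ennreal (H k \<omega>) \<partial>M)"
      unfolding a_def using k by (subst nn_integral_cmult[symmetric]) (auto simp: mult.commute)
    then show "(\<integral>\<^sup>+\<omega>. a k \<omega> \<partial>M) = ennreal P * (m1 * c1)" using indH1[OF k] by (simp add: mult.commute)
  qed
  also have "\<dots> = ennreal P * (of_nat (card S) * (m1 * c1))" by (simp add: ac_simps)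
  finally show "(\<integral>\<^sup>+\<omega>. ennreal (Y \<omega>) \<partial>M) = ennreal P * (of_nat (card S) * (m1 * c1))" .
  have AEYnn: "AE \<omega> in M. Y \<omega> \<ge> 0"
    using AEH U_nonneg
  proof eventually_elim
    case (elim \<omega>)
    then show ?case unfolding Y_def using P G_nonneg by (auto intro!: sum_nonneg mult_nonneg_nonneg)
  qed
  have AEY2: "AE \<omega> in M. ennreal ((Y \<omega>)^2) = (\<Sum>k\<in>S. \<Sum>j\<in>S. a k \<omega> * a j \<omega>)"
    using AEY AEYnn
  proof eventually_elim
    case (elim \<omega>)
    have "ennreal ((Y \<omega>)^2) = ennreal (Y \<omega>) * ennreal (Y \<omega>)"
      using elim(2) by (simp add: power2_eq_square ennreal_mult)
    then show ?case unfolding elim(1) sum_product .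
  qed
  have "(\<integral>\<^sup>+\<omega>. ennreal ((Y \<omega>)^2) \<partial>M) = (\<integral>\<^sup>+\<omega>. (\<Sum>k\<in>S. \<Sum>j\<in>S. a k \<omega> * a j \<omega>) \<partial>M)"
    by (rule nn_integral_cong_AE[OF AEY2])
  also have "\<dots> = (\<Sum>k\<in>S. \<Sum>j\<in>S. \<integral>\<^sup>+\<omega>. a k \<omega> * a j \<omega> \<partial>M)"
    by (subst nn_integral_sum, simp, measurable, intro sum.cong refl nn_integral_sum) auto
  also have "\<dots> = (\<Sum>k\<in>S. \<Sum>j\<in>S. ennreal P * ennreal P * (if k = j then m2 * c2 else m1 * m1 * (c1 * c1)))"
  proof (intro sum.cong refl)
    fix k j assume k: "k \<in> S" and j: "j \<in> S"
    have "(\<integral>\<^sup>+\<omega>. a k \<omega> * a j \<omega> \<partial>M) = (\<integral>\<^sup>+\<omega>. (ennreal P * ennreal P) * ((ennreal (G (U k \<omega>)) * ennreal (G (U j \<omega>))) * (ennreal (H k \<omega>) * ennreal (H j \<omega>))) \<partial>M)"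
      unfolding a_def by (intro nn_integral_cong) (simp add: ac_simps)
    also have "\<dots> = (ennreal P * ennreal P) * (\<integral>\<^sup>+\<omega>. (ennreal (G (U k \<omega>)) * ennreal (G (U j \<omega>))) * (ennreal (H k \<omega>) * ennreal (H j \<omega>)) \<partial>M)"
      using k j by (intro nn_integral_cmult) measurable
    also have "\<dots> = ennreal P * ennreal P * (if k = j then m2 * c2 else m1 * m1 * (c1 * c1))"
      unfolding indHG[OF k j] EGG[OF k j] EHH by (simp add: ac_simps)
    finally show "(\<integral>\<^sup>+\<omega>. a k \<omega> * a j \<omega> \<partial>M) = ennreal P * ennreal P * (if k = j then m2 * c2 else m1 * m1 * (c1 * c1))" .
  qed
  also have "\<dots> = (\<Sum>k\<in>S. ennreal P * ennreal P * (m2 * c2 + of_nat (card S - 1) * (m1 * m1 * (c1 * c1))))"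
  proof (intro sum.cong refl)
    fix k assume k: "k \<in> S"
    have "(\<Sum>j\<in>S. ennreal P * ennreal P * (if k = j then m2 * c2 else m1 * m1 * (c1 * c1))) =
      ennreal P * ennreal P * (\<Sum>j\<in>S. (if k = j then m2 * c2 else m1 * m1 * (c1 * c1)))"
      by (simp add: sum_distrib_left)
    also have "\<dots> = ennreal P * ennreal P * (m2 * c2 + of_nat (card S - 1) * (m1 * m1 * (c1 * c1)))"
      using sum_if_eq[OF S k] by simp
    finally show "(\<Sum>j\<in>S. ennreal P * ennreal P * (if k = j then m2 * c2 else m1 * m1 * (c1 * c1))) =
      ennreal P * ennreal P * (m2 * c2 + of_nat (card S - 1) * (m1 * m1 * (c1 * c1)))" .
  qed
  also have "\<dots> = ennreal P * ennreal P * (of_nat (card S) * (m2 * c2 + of_nat (card S - 1) * (m1 * m1 * (c1 * c1))))"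
    by (simp add: ac_simps)
  finally show "(\<integral>\<^sup>+\<omega>. ennreal ((Y \<omega>)^2) \<partial>M) = ennreal P * ennreal P *
           (of_nat (card S) * (m2 * c2 + of_nat (card S - 1) * (m1 * m1 * (c1 * c1))))" .
qed

lemma var_alg:
  fixes L N P m1 m2 lam a b :: real
  assumes "L > 0"
  shows "P*P*(N*(m2*(lam/L*b) + (N-1)*(m1*m1*((lam/L*a)*(lam/L*a))))) - (P*(N*(m1*(lam/L*a))))^2
    = P*P*(m2*lam*((N/L)*b) - m1*m1*lam*lam*((N/L)*(a*a)*inverse L))"
  using assms by (simp add: field_simps power2_eq_square)
lemma var_alg2:
  fixes P m1 m2 lam a b :: real
  shows "P*P*(m2*(lam*b) + m1*m1*((lam*a)*(lam*a))) - (P*(m1*(lam*a)))^2 = P*P*(m2*lam*(1*b) - m1*m1*lam*lam*(1*(a*a)*0))"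
  by (simp add: power2_eq_square algebra_simps)

theorem lemma3:
  fixes M :: "'w measure"
    and lam \<alpha> P :: real
    and \<Lambda> :: "(real^2) measure"
    and Xo :: "real^2"
    and X :: "nat \<Rightarrow> 'w \<Rightarrow> real^2"
    and p G q :: "real \<Rightarrow> real"
    and H :: "nat \<Rightarrow> 'w \<Rightarrow> real"
    and U :: "nat \<Rightarrow> nat \<Rightarrow> 'w \<Rightarrow> real"
    and \<Lambda>n :: "nat \<Rightarrow> real"
    and Ilam :: "'w \<Rightarrow> real"
    and In :: "nat \<Rightarrow> 'w \<Rightarrow> real"
  assumes M: "prob_space M"
    and lam_pos: "lam > 0" and alpha: "\<alpha> > 2" and P_pos: "P > 0"
    (* Poisson point process with locally finite, infinite mean measure *)
    and PPP: "poisson_point_process M \<Lambda> X"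
    and loc_fin: "\<And>K. compact K \<Longrightarrow> emeasure \<Lambda> K < \<infinity>"
    and Lambda_inf: "emeasure \<Lambda> UNIV = \<infinity>"
    (* radial intensity *)
    and p_meas: "p \<in> borel_measurable borel"
    and p_nonneg: "\<And>t. p t \<ge> 0"
    and p_growth: "\<exists>\<epsilon>>0. p \<in> O(\<lambda>t. t powr (\<alpha> - 1 - \<epsilon>))"
    and radial: "\<And>A. A \<in> sets borel \<Longrightarrow> A \<subseteq> {0..} \<Longrightarrow>
        emeasure \<Lambda> ((\<lambda>x. dist x Xo) -` A) = ennreal lam * (\<integral>\<^sup>+ t\<in>A. ennreal (p t) \<partial>lborel)"
    (* path loss *)
    and G_meas: "G \<in> borel_measurable borel"
    and G_nonneg: "\<And>t. t \<ge> 0 \<Longrightarrow> G t \<ge> 0"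
    and G_bdd: "bdd_above (G ` {0..})"
    and G_mono: "\<And>s t. 0 \<le> s \<Longrightarrow> s \<le> t \<Longrightarrow> G t \<le> G s"
    and G_decay: "G \<in> O(\<lambda>t. t powr (- \<alpha>))"
    (* fading *)
    and H_nonneg: "\<And>k. AE \<omega> in M. H k \<omega> \<ge> 0"
    and H_dens: "\<And>k. distributed M lborel (H k) (\<lambda>x. ennreal (q x))"
    and H_indep: "prob_space.indep_vars M (\<lambda>_. borel) H UNIV"
    and H_mom: "\<And>k j. j \<in> {1, 2, 3} \<Longrightarrow> integrable M (\<lambda>\<omega>. (H k \<omega>) ^ j)"
    and H_X_indep: "indep_rvs M
        (PiM UNIV (\<lambda>_. borel)) (\<lambda>\<omega> k. X k \<omega>) (PiM UNIV (\<lambda>_. borel)) (\<lambda>\<omega> k. H k \<omega>)"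
    and Ilam_def: "\<And>\<omega>. Ilam \<omega> = enn2real (\<Sum>k. ennreal (P * H k \<omega> * G (dist (X k \<omega>) Xo)))"
    (* truncated model *)
    and \<Lambda>n_def: "\<And>n. \<Lambda>n n = lam * (LINT t:{0..real n}|lborel. p t)"
    and U_dens: "\<And>n k. k \<in> {1..nat \<lceil>\<Lambda>n n\<rceil>} \<Longrightarrow>
        distributed M lborel (U n k)
          (\<lambda>t. ennreal (lam * p t / \<Lambda>n n * indicator {0..real n} t))"
    and U_indep: "\<And>n. prob_space.indep_vars M (\<lambda>_. borel) (U n) {1..nat \<lceil>\<Lambda>n n\<rceil>}"
    and U_H_indep: "\<And>n. indep_rvs M
        (PiM {1..nat \<lceil>\<Lambda>n n\<rceil>} (\<lambda>_. borel)) (\<lambda>\<omega>. \<lambda>k\<in>{1..nat \<lceil>\<Lambda>n n\<rceil>}. U n k \<omega>)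
        (PiM UNIV (\<lambda>_. borel)) (\<lambda>\<omega> k. H k \<omega>)"
    and In_def: "\<And>n \<omega>. In n \<omega> = (\<Sum>k\<in>{1..nat \<lceil>\<Lambda>n n\<rceil>}. P * H k \<omega> * G (U n k \<omega>))"
  shows "(\<lambda>n. integral\<^sup>L M (In n)) \<longlonglongrightarrow> integral\<^sup>L M Ilam
     \<and> (\<lambda>n. integral\<^sup>L M (\<lambda>\<omega>. (In n \<omega> - integral\<^sup>L M (In n))\<^sup>2))
         \<longlonglongrightarrow> integral\<^sup>L M (\<lambda>\<omega>. (Ilam \<omega> - integral\<^sup>L M Ilam)\<^sup>2)"
proof -
  interpret ppp M \<Lambda> X by (rule ppp.intro[OF M PPP])
  note [measurable] = p_meas G_meas
  have sL: "sets \<Lambda> = sets borel" by (rule sets_Lambda)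
  have spL: "space \<Lambda> = UNIV" using sets_eq_imp_space_eq[OF sL] by simp
  have dm[measurable]: "(\<lambda>x. dist x Xo) \<in> borel_measurable borel" by measurable
  define f0 where "f0 t = ennreal lam * (ennreal (p t) * indicator {0..} t)" for t :: real
  have f0m[measurable]: "f0 \<in> borel_measurable borel" unfolding f0_def by measurable
  have distrL: "distr \<Lambda> borel (\<lambda>x. dist x Xo) = density lborel f0"
  proof (rule measure_eqI)
    show "sets (distr \<Lambda> borel (\<lambda>x. dist x Xo)) = sets (density lborel f0)" by simp
  next
    fix A assume "A \<in> sets (distr \<Lambda> borel (\<lambda>x. dist x Xo))"
    then have A[measurable]: "A \<in> sets borel" by simp
    have dmL: "(\<lambda>x. dist x Xo) \<in> measurable \<Lambda> borel" unfolding meas_Lambda by measurable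
    have "emeasure (distr \<Lambda> borel (\<lambda>x. dist x Xo)) A = emeasure \<Lambda> ((\<lambda>x. dist x Xo) -` A \<inter> space \<Lambda>)"
      by (rule emeasure_distr[OF dmL A])
    also have "(\<lambda>x. dist x Xo) -` A \<inter> space \<Lambda> = (\<lambda>x. dist x Xo) -` (A \<inter> {0..})"
      using spL by auto
    also have "emeasure \<Lambda> \<dots> = ennreal lam * (\<integral>\<^sup>+ t\<in>A \<inter> {0..}. ennreal (p t) \<partial>lborel)"
      by (rule radial) auto
    also have "\<dots> = (\<integral>\<^sup>+ t. f0 t * indicator A t \<partial>lborel)"
      unfolding f0_def by (subst nn_integral_cmult[symmetric]) (auto intro!: nn_integral_cong simp: indicator_def)
    also have "\<dots> = emeasure (density lborel f0) A" by (rule emeasure_density[symmetric]) auto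
    finally show "emeasure (distr \<Lambda> borel (\<lambda>x. dist x Xo)) A = emeasure (density lborel f0) A" .
  qed
  have push: "(\<integral>\<^sup>+x. F (dist x Xo) \<partial>\<Lambda>) = (\<integral>\<^sup>+t. f0 t * F t \<partial>lborel)"
    if F[measurable]: "F \<in> borel_measurable borel" for F
  proof -
    have dmL: "(\<lambda>x. dist x Xo) \<in> measurable \<Lambda> borel" unfolding meas_Lambda by measurable
    have "(\<integral>\<^sup>+x. F (dist x Xo) \<partial>\<Lambda>) = (\<integral>\<^sup>+t. F t \<partial>distr \<Lambda> borel (\<lambda>x. dist x Xo))"
      by (rule nn_integral_distr[symmetric]) (use dmL in auto)
    also have "\<dots> = (\<integral>\<^sup>+t. f0 t * F t \<partial>lborel)" unfolding distrL by (rule nn_integral_density) auto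
    finally show ?thesis .
  qed
  have ploc: "(\<integral>\<^sup>+t. ennreal (p t) * indicator {0..R} t \<partial>lborel) < \<infinity>" for R
  proof (cases "R \<ge> 0")
    case False
    then have "(\<lambda>t. ennreal (p t) * indicator {0..R} t) = (\<lambda>_. 0)" by (auto simp: fun_eq_iff)
    then show ?thesis by simp
  next
    case True
    have "(\<lambda>x. dist x Xo) -` {0..R} = cball Xo R" by (auto simp: dist_commute)
    then have "emeasure \<Lambda> (cball Xo R) = ennreal lam * (\<integral>\<^sup>+ t\<in>{0..R}. ennreal (p t) \<partial>lborel)"
      using radial[of "{0..R}"] by auto
    moreover have "emeasure \<Lambda> (cball Xo R) < \<infinity>" by (rule loc_fin) simp
    ultimately have "ennreal lam * (\<integral>\<^sup>+ t. ennreal (p t) * indicator {0..R} t \<partial>lborel) < \<infinity>" by simp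
    then have "(\<integral>\<^sup>+ t. ennreal (p t) * indicator {0..R} t \<partial>lborel) = 0 \<or> (\<integral>\<^sup>+ t. ennreal (p t) * indicator {0..R} t \<partial>lborel) < \<infinity>"
      using lam_pos by (simp add: ennreal_mult_less_top)
    then show ?thesis by auto
  qed
  have pinf: "(\<integral>\<^sup>+t. ennreal (p t) * indicator {0..} t \<partial>lborel) = \<infinity>"
  proof -
    have "(\<lambda>x. dist x Xo) -` {0..} = UNIV" by auto
    then have "emeasure \<Lambda> UNIV = ennreal lam * (\<integral>\<^sup>+ t\<in>{0..}. ennreal (p t) \<partial>lborel)"
      using radial[of "{0..}"] by auto
    then have "ennreal lam * (\<integral>\<^sup>+ t. ennreal (p t) * indicator {0..} t \<partial>lborel) = \<infinity>" using Lambda_inf by simp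
    then show ?thesis by (simp add: ennreal_mult_eq_top_iff)
  qed
  have G0: "G t \<le> G 0" if "t \<ge> 0" for t using G_mono[of 0 t] that by simp
  define J1 where "J1 = (\<integral>\<^sup>+t. ennreal (G t * p t) * indicator {0..} t \<partial>lborel)"
  define J2 where "J2 = (\<integral>\<^sup>+t. ennreal (G t * G t * p t) * indicator {0..} t \<partial>lborel)"
  define J1n where "J1n n = (\<integral>\<^sup>+t. ennreal (G t * p t) * indicator {0..real n} t \<partial>lborel)" for n :: nat
  define J2n where "J2n n = (\<integral>\<^sup>+t. ennreal (G t * G t * p t) * indicator {0..real n} t \<partial>lborel)" for n :: nat
  define Pn where "Pn n = (\<integral>\<^sup>+t. ennreal (p t) * indicator {0..real n} t \<partial>lborel)" for n :: nat
  have J1fin: "J1 < \<infinity>" unfolding J1_def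
    by (rule tail_finite[OF p_meas p_nonneg p_growth G_meas G_nonneg G_mono G_decay ploc])
  have J2fin: "J2 < \<infinity>"
  proof -
    have "J2 \<le> (\<integral>\<^sup>+t. ennreal (G 0) * (ennreal (G t * p t) * indicator {0..} t) \<partial>lborel)"
      unfolding J2_def
    proof (rule nn_integral_mono)
      fix t show "ennreal (G t * G t * p t) * indicator {0..} t \<le> ennreal (G 0) * (ennreal (G t * p t) * indicator {0..} t)"
      proof (cases "t \<ge> 0")
        case True
        have "G t * G t * p t \<le> G 0 * (G t * p t)"
          using G0[OF True] G_nonneg[OF True] p_nonneg[of t]
          by (metis mult.assoc mult_nonneg_nonneg mult_right_mono)
        then have "ennreal (G t * G t * p t) \<le> ennreal (G 0 * (G t * p t))" by (rule ennreal_leI)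
        then show ?thesis using True G_nonneg[of 0] by (simp add: ennreal_mult')
      qed simp
    qed
    also have "\<dots> = ennreal (G 0) * J1" unfolding J1_def by (rule nn_integral_cmult) measurable
    finally show ?thesis using J1fin by (simp add: ennreal_mult_less_top order.strict_trans1)
  qed
  have trunc: "incseq (\<lambda>n. \<integral>\<^sup>+t. h t * indicator {0..real n} t \<partial>lborel) \<and>
      (SUP n. \<integral>\<^sup>+t. h t * indicator {0..real n} t \<partial>lborel) = (\<integral>\<^sup>+t. h t * indicator {0..} t \<partial>lborel)"
    if h[measurable]: "h \<in> borel_measurable borel" for h :: "real \<Rightarrow> ennreal"
  proof
    have inc: "incseq (\<lambda>n t. h t * indicator {0..real n} t)"
      by (auto simp: incseq_def le_fun_def indicator_def intro!: mult_left_mono)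
    then show "incseq (\<lambda>n. \<integral>\<^sup>+t. h t * indicator {0..real n} t \<partial>lborel)"
      by (auto simp: incseq_def le_fun_def intro!: nn_integral_mono)
    have S: "(SUP n. h t * indicator {0..real n} t) = h t * indicator {0..} t" for t
    proof (cases "t \<ge> 0")
      case True
      obtain n0 :: nat where n0: "t \<le> real n0" using real_arch_simple by blast
      show ?thesis
      proof (rule antisym)
        show "(SUP n. h t * indicator {0..real n} t) \<le> h t * indicator {0..} t"
          by (rule SUP_least) (auto simp: indicator_def)
        have "h t * indicator {0..} t = h t * indicator {0..real n0} t" using True n0 by simp
        also have "\<dots> \<le> (SUP n. h t * indicator {0..real n} t)" by (rule SUP_upper) auto
        finally show "h t * indicator {0..} t \<le> (SUP n. h t * indicator {0..real n} t)" .
      qed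
    qed simp
    show "(SUP n. \<integral>\<^sup>+t. h t * indicator {0..real n} t \<partial>lborel) = (\<integral>\<^sup>+t. h t * indicator {0..} t \<partial>lborel)"
      using nn_integral_monotone_convergence_SUP[OF inc] by (simp add: S)
  qed
  have lim_enn: "(\<lambda>n. \<integral>\<^sup>+t. h t * indicator {0..real n} t \<partial>lborel) \<longlonglongrightarrow> (\<integral>\<^sup>+t. h t * indicator {0..} t \<partial>lborel)"
    if h[measurable]: "h \<in> borel_measurable borel" for h :: "real \<Rightarrow> ennreal"
    using LIMSEQ_SUP[of "\<lambda>n. \<integral>\<^sup>+t. h t * indicator {0..real n} t \<partial>lborel"] trunc[OF h] by simp
  have J1lim: "(\<lambda>n. enn2real (J1n n)) \<longlonglongrightarrow> enn2real J1"
  proof -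
    have "(\<lambda>n. J1n n) \<longlonglongrightarrow> J1" unfolding J1n_def J1_def by (rule lim_enn) measurable
    then have "(\<lambda>n. J1n n) \<longlonglongrightarrow> ennreal (enn2real J1)" using J1fin by simp
    then show ?thesis by (rule tendsto_enn2real) simp
  qed
  have J2lim: "(\<lambda>n. enn2real (J2n n)) \<longlonglongrightarrow> enn2real J2"
  proof -
    have "(\<lambda>n. J2n n) \<longlonglongrightarrow> J2" unfolding J2n_def J2_def by (rule lim_enn) measurable
    then have "(\<lambda>n. J2n n) \<longlonglongrightarrow> ennreal (enn2real J2)" using J2fin by simp
    then show ?thesis by (rule tendsto_enn2real) simp
  qed
  have J1n_le: "J1n n \<le> J1" for n
    unfolding J1n_def J1_def by (intro nn_integral_mono) (auto simp: indicator_def)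
  have J2n_le: "J2n n \<le> J2" for n
    unfolding J2n_def J2_def by (intro nn_integral_mono) (auto simp: indicator_def)
  have J1n_fin: "J1n n < \<infinity>" for n using J1n_le[of n] J1fin by (rule le_less_trans)
  have J2n_fin: "J2n n < \<infinity>" for n using J2n_le[of n] J2fin by (rule le_less_trans)
  have Lam_eq: "\<Lambda>n n = lam * enn2real (Pn n)" for n
  proof -
    have "(LINT t:{0..real n}|lborel. p t) = enn2real (\<integral>\<^sup>+t. ennreal (indicator {0..real n} t *\<^sub>R p t) \<partial>lborel)"
      unfolding set_lebesgue_integral_def
      by (rule integral_eq_nn_integral) (auto simp: p_nonneg)
    also have "(\<integral>\<^sup>+t. ennreal (indicator {0..real n} t *\<^sub>R p t) \<partial>lborel) = Pn n"
      unfolding Pn_def by (intro nn_integral_cong) (auto simp: indicator_def)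
    finally show ?thesis using \<Lambda>n_def by simp
  qed
  have Lam_top: "filterlim \<Lambda>n at_top sequentially"
  proof -
    have incP: "incseq Pn" and supP: "(SUP n. Pn n) = \<infinity>"
      using trunc[of "\<lambda>t. ennreal (p t)"] pinf unfolding Pn_def by auto
    have "filterlim (\<lambda>n. enn2real (Pn n)) at_top sequentially"
    proof (subst filterlim_at_top, intro allI)
      fix Z :: real
      have "ennreal Z < (SUP n. Pn n)" unfolding supP by simp
      then obtain n0 where n0: "ennreal Z < Pn n0" unfolding less_SUP_iff by blast
      show "eventually (\<lambda>n. Z \<le> enn2real (Pn n)) sequentially"
        unfolding eventually_sequentially
      proof (intro exI allI impI)
        fix n assume "n0 \<le> n"
        then have "ennreal Z < Pn n" using n0 incP by (auto simp: incseq_def intro: less_le_trans)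
        moreover have "Pn n < \<infinity>" unfolding Pn_def by (rule ploc)
        ultimately show "Z \<le> enn2real (Pn n)"
        proof (cases "Z \<ge> 0")
          case True
          assume a: "ennreal Z < Pn n" "Pn n < \<infinity>"
          have "enn2real (ennreal Z) \<le> enn2real (Pn n)" using a by (intro enn2real_mono) auto
          then show ?thesis using True by simp
        next
          case False then show ?thesis using enn2real_nonneg[of "Pn n"] by linarith
        qed
      qed
    qed
    then have "filterlim (\<lambda>n. lam * enn2real (Pn n)) at_top sequentially"
      using lam_pos by (intro filterlim_tendsto_pos_mult_at_top[OF tendsto_const]) auto
    moreover have "\<Lambda>n = (\<lambda>n. lam * enn2real (Pn n))" by (rule ext) (rule Lam_eq)
    ultimately show ?thesis by simp
  qed
  have Hm[measurable]: "H k \<in> borel_measurable M" for k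
    using H_indep unfolding prob_space.indep_vars_def[OF M] by auto
  define m1 where "m1 = (\<integral>\<^sup>+\<omega>. ennreal (H 0 \<omega>) \<partial>M)"
  define m2 where "m2 = (\<integral>\<^sup>+\<omega>. ennreal (H 0 \<omega>) * ennreal (H 0 \<omega>) \<partial>M)"
  have Hdist: "(\<integral>\<^sup>+\<omega>. F (H k \<omega>) \<partial>M) = (\<integral>\<^sup>+x. ennreal (q x) * F x \<partial>lborel)"
    if F[measurable]: "F \<in> borel_measurable borel" for F k
    using distributed_nn_integral[OF H_dens[of k], of F] by simp
  have m1k: "(\<integral>\<^sup>+\<omega>. ennreal (H k \<omega>) \<partial>M) = m1" for k
    unfolding m1_def using Hdist[of "\<lambda>x. ennreal x" k] Hdist[of "\<lambda>x. ennreal x" 0] by simp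
  have m2k: "(\<integral>\<^sup>+\<omega>. ennreal (H k \<omega>) * ennreal (H k \<omega>) \<partial>M) = m2" for k
    unfolding m2_def using Hdist[of "\<lambda>x. ennreal x * ennreal x" k] Hdist[of "\<lambda>x. ennreal x * ennreal x" 0] by simp
  have m1fin: "m1 < \<infinity>"
  proof -
    have "integrable M (\<lambda>\<omega>. (H 0 \<omega>) ^ 1)" by (rule H_mom) simp
    then have "(\<integral>\<^sup>+\<omega>. ennreal (norm (H 0 \<omega>)) \<partial>M) < \<infinity>" by (simp add: integrable_iff_bounded)
    moreover have "m1 \<le> (\<integral>\<^sup>+\<omega>. ennreal (norm (H 0 \<omega>)) \<partial>M)" unfolding m1_def
      by (intro nn_integral_mono ennreal_leI) auto
    ultimately show ?thesis by (rule le_less_trans[rotated])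
  qed
  have m2fin: "m2 < \<infinity>"
  proof -
    have "integrable M (\<lambda>\<omega>. (H 0 \<omega>) ^ 2)" by (rule H_mom) simp
    then have "(\<integral>\<^sup>+\<omega>. ennreal (norm ((H 0 \<omega>) ^ 2)) \<partial>M) < \<infinity>" by (simp add: integrable_iff_bounded)
    moreover have "m2 \<le> (\<integral>\<^sup>+\<omega>. ennreal (norm ((H 0 \<omega>) ^ 2)) \<partial>M)" unfolding m2_def
    proof (intro nn_integral_mono)
      fix \<omega> show "ennreal (H 0 \<omega>) * ennreal (H 0 \<omega>) \<le> ennreal (norm ((H 0 \<omega>) ^ 2))"
        by (cases "H 0 \<omega> \<ge> 0") (auto simp: ennreal_mult[symmetric] power2_eq_square ennreal_neg)
    qed
    ultimately show ?thesis by (rule le_less_trans[rotated])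
  qed
  define Kb where "Kb r = cball Xo (real r)" for r :: nat
  have Kinc: "incseq Kb" unfolding Kb_def incseq_def by (auto simp: subset_cball)
  have Kun: "(\<Union>r. Kb r) = UNIV"
  proof -
    have "x \<in> (\<Union>r. Kb r)" for x
    proof -
      obtain r :: nat where "dist Xo x \<le> real r" using real_arch_simple by blast
      then show ?thesis unfolding Kb_def by auto
    qed
    then show ?thesis by auto
  qed
  have Kbor: "Kb r \<in> sets borel" for r unfolding Kb_def by simp
  have Kfin: "emeasure \<Lambda> (Kb r) < \<infinity>" for r unfolding Kb_def by (rule loc_fin) simp
  define g where "g x = ennreal (G (dist x Xo))" for x :: "real^2"
  have gm[measurable]: "g \<in> borel_measurable borel" unfolding g_def by measurable
  have I1: "(\<integral>\<^sup>+x. g x \<partial>\<Lambda>) = ennreal lam * J1"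
  proof -
    have "(\<integral>\<^sup>+x. g x \<partial>\<Lambda>) = (\<integral>\<^sup>+t. f0 t * ennreal (G t) \<partial>lborel)"
      unfolding g_def by (rule push) measurable
    also have "\<dots> = (\<integral>\<^sup>+t. ennreal lam * (ennreal (G t * p t) * indicator {0..} t) \<partial>lborel)"
      unfolding f0_def by (intro nn_integral_cong) (auto simp: indicator_def ennreal_mult p_nonneg G_nonneg mult.commute mult.left_commute)
    also have "\<dots> = ennreal lam * J1" unfolding J1_def by (rule nn_integral_cmult) measurable
    finally show ?thesis .
  qed
  have I2: "(\<integral>\<^sup>+x. g x * g x \<partial>\<Lambda>) = ennreal lam * J2"
  proof -
    have "(\<integral>\<^sup>+x. g x * g x \<partial>\<Lambda>) = (\<integral>\<^sup>+t. f0 t * (ennreal (G t) * ennreal (G t)) \<partial>lborel)"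
      unfolding g_def by (rule push) measurable
    also have "\<dots> = (\<integral>\<^sup>+t. ennreal lam * (ennreal (G t * G t * p t) * indicator {0..} t) \<partial>lborel)"
      unfolding f0_def by (intro nn_integral_cong) (auto simp: indicator_def ennreal_mult p_nonneg G_nonneg mult.commute mult.left_commute)
    also have "\<dots> = ennreal lam * J2" unfolding J2_def by (rule nn_integral_cmult) measurable
    finally show ?thesis .
  qed
  have I2fin: "(\<integral>\<^sup>+x. g x * g x \<partial>\<Lambda>) < \<infinity>" unfolding I2 using J2fin by (simp add: ennreal_mult_less_top)
  define W where "W \<omega> = (\<Sum>k. ennreal (H k \<omega>) * g (X k \<omega>))" for \<omega>
  have Wm[measurable]: "W \<in> borel_measurable M" unfolding W_def by measurable
  have EW: "(\<integral>\<^sup>+\<omega>. W \<omega> \<partial>M) = m1 * (\<integral>\<^sup>+x. g x \<partial>\<Lambda>)"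
    unfolding W_def by (rule marked_moments(1)[OF Kinc Kun Kbor Kfin gm H_indep H_X_indep m1k m2k I2fin])
  have EWW: "(\<integral>\<^sup>+\<omega>. W \<omega> * W \<omega> \<partial>M) = m2 * (\<integral>\<^sup>+x. g x * g x \<partial>\<Lambda>) + m1 * m1 * ((\<integral>\<^sup>+x. g x \<partial>\<Lambda>) * (\<integral>\<^sup>+x. g x \<partial>\<Lambda>))"
    unfolding W_def by (rule marked_moments(2)[OF Kinc Kun Kbor Kfin gm H_indep H_X_indep m1k m2k I2fin])
  have Ilam_eq: "Ilam \<omega> = enn2real (ennreal P * W \<omega>)" for \<omega>
  proof -
    have "(\<Sum>k. ennreal (P * H k \<omega> * G (dist (X k \<omega>) Xo))) = (\<Sum>k. ennreal P * (ennreal (H k \<omega>) * g (X k \<omega>)))"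
      unfolding g_def using P_pos G_nonneg by (intro suminf_cong ennreal_PHG) auto
    then show ?thesis unfolding Ilam_def W_def by simp
  qed
  have Ilam_m[measurable]: "Ilam \<in> borel_measurable M"
  proof -
    have "Ilam = (\<lambda>\<omega>. enn2real (ennreal P * W \<omega>))" by (rule ext) (rule Ilam_eq)
    then show ?thesis by simp
  qed
  have EPW: "(\<integral>\<^sup>+\<omega>. ennreal P * W \<omega> \<partial>M) = ennreal P * (m1 * (ennreal lam * J1))"
    by (subst nn_integral_cmult) (auto simp: EW I1)
  have EPWfin: "(\<integral>\<^sup>+\<omega>. ennreal P * W \<omega> \<partial>M) \<noteq> \<infinity>"
    unfolding EPW using m1fin J1fin by (auto simp: ennreal_mult_eq_top_iff)
  have AEfin: "AE \<omega> in M. ennreal P * W \<omega> \<noteq> \<infinity>"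
    by (rule nn_integral_noteq_infinite[OF _ EPWfin]) measurable
  have AE1: "AE \<omega> in M. ennreal (Ilam \<omega>) = ennreal P * W \<omega>"
    using AEfin by eventually_elim (simp add: Ilam_eq ennreal_enn2real_if)
  have AE2: "AE \<omega> in M. ennreal ((Ilam \<omega>)^2) = ennreal P * ennreal P * (W \<omega> * W \<omega>)"
    using AE1
  proof eventually_elim
    case (elim \<omega>)
    have "ennreal ((Ilam \<omega>)^2) = ennreal (Ilam \<omega>) * ennreal (Ilam \<omega>)"
      using enn2real_nonneg by (simp add: Ilam_eq power2_eq_square ennreal_mult)
    then show ?case unfolding elim by (simp add: ac_simps)
  qed
  define m1r where "m1r = enn2real m1"
  define m2r where "m2r = enn2real m2"
  define j1 where "j1 = enn2real J1"
  define j2 where "j2 = enn2real J2"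
  have m1e: "m1 = ennreal m1r" unfolding m1r_def using m1fin by simp
  have m2e: "m2 = ennreal m2r" unfolding m2r_def using m2fin by simp
  have j1e: "J1 = ennreal j1" unfolding j1_def using J1fin by simp
  have j2e: "J2 = ennreal j2" unfolding j2_def using J2fin by simp
  have nn: "m1r \<ge> 0" "m2r \<ge> 0" "j1 \<ge> 0" "j2 \<ge> 0"
    unfolding m1r_def m2r_def j1_def j2_def by auto
  have ElamE1: "(\<integral>\<^sup>+\<omega>. ennreal (Ilam \<omega>) \<partial>M) = ennreal (P * (m1r * (lam * j1)))"
  proof -
    have "(\<integral>\<^sup>+\<omega>. ennreal (Ilam \<omega>) \<partial>M) = (\<integral>\<^sup>+\<omega>. ennreal P * W \<omega> \<partial>M)"
      by (rule nn_integral_cong_AE[OF AE1])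
    then show ?thesis unfolding EPW m1e j1e using nn P_pos lam_pos by (simp add: ennreal_mult)
  qed
  have ElamE2: "(\<integral>\<^sup>+\<omega>. ennreal ((Ilam \<omega>)^2) \<partial>M) = ennreal (P * P * (m2r * (lam * j2) + m1r * m1r * ((lam * j1) * (lam * j1))))"
  proof -
    have "(\<integral>\<^sup>+\<omega>. ennreal ((Ilam \<omega>)^2) \<partial>M) = (\<integral>\<^sup>+\<omega>. ennreal P * ennreal P * (W \<omega> * W \<omega>) \<partial>M)"
      by (rule nn_integral_cong_AE[OF AE2])
    also have "\<dots> = ennreal P * ennreal P * (\<integral>\<^sup>+\<omega>. W \<omega> * W \<omega> \<partial>M)"
      by (rule nn_integral_cmult) measurable
    finally show ?thesis unfolding EWW I1 I2 m1e m2e j1e j2e using nn P_pos lam_pos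
      by (simp add: ennreal_mult[symmetric] ennreal_plus[symmetric] del: ennreal_plus)
  qed
  have Ilam_nn: "AE \<omega> in M. Ilam \<omega> \<ge> 0" by (simp add: Ilam_eq)
  have EIlam: "integral\<^sup>L M Ilam = P * (m1r * (lam * j1))"
    and VIlam: "integral\<^sup>L M (\<lambda>\<omega>. (Ilam \<omega> - integral\<^sup>L M Ilam)^2) =
       P * P * (m2r * (lam * j2) + m1r * m1r * ((lam * j1) * (lam * j1))) - (P * (m1r * (lam * j1)))^2"
    by (rule mom_to_var[OF M Ilam_m Ilam_nn ElamE1 ElamE2]; use nn P_pos lam_pos in auto)+
  define Nn where "Nn n = nat \<lceil>\<Lambda>n n\<rceil>" for n
  define j1n where "j1n n = enn2real (J1n n)" for n
  define j2n where "j2n n = enn2real (J2n n)" for n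
  define c1r where "c1r n = lam / \<Lambda>n n * j1n n" for n
  define c2r where "c2r n = lam / \<Lambda>n n * j2n n" for n
  have Lnn: "\<Lambda>n n \<ge> 0" for n unfolding Lam_eq using lam_pos by simp
  have j1ne: "J1n n = ennreal (j1n n)" for n unfolding j1n_def using J1n_fin[of n] by simp
  have j2ne: "J2n n = ennreal (j2n n)" for n unfolding j2n_def using J2n_fin[of n] by simp
  have nnn: "j1n n \<ge> 0" "j2n n \<ge> 0" "c1r n \<ge> 0" "c2r n \<ge> 0" for n
    unfolding c1r_def c2r_def j1n_def j2n_def using lam_pos Lnn[of n] by auto
  have InMom: "integral\<^sup>L M (In n) = P * (real (Nn n) * (m1r * c1r n)) \<and>
      integral\<^sup>L M (\<lambda>\<omega>. (In n \<omega> - integral\<^sup>L M (In n))^2) =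
      P * P * (real (Nn n) * (m2r * c2r n + real (Nn n - 1) * (m1r * m1r * (c1r n * c1r n)))) - (P * (real (Nn n) * (m1r * c1r n)))^2"
    for n
  proof -
    define S where "S = {1..Nn n}"
    have cS: "card S = Nn n" unfolding S_def by simp
    have fS: "finite S" unfolding S_def by simp
    have dens: "distributed M lborel (U n k) (\<lambda>t. ennreal (lam * p t / \<Lambda>n n * indicator {0..real n} t))"
      if "k \<in> S" for k using U_dens that unfolding S_def Nn_def by simp
    have Uind: "prob_space.indep_vars M (\<lambda>_. borel) (U n) S" using U_indep unfolding S_def Nn_def by simp
    have UH: "indep_rvs M (PiM S (\<lambda>_. borel)) (\<lambda>\<omega>. \<lambda>k\<in>S. U n k \<omega>) (PiM UNIV (\<lambda>_. borel)) (\<lambda>\<omega> k. H k \<omega>)"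
      using U_H_indep unfolding S_def Nn_def by simp
    have Udist: "(\<integral>\<^sup>+\<omega>. F (U n k \<omega>) \<partial>M) = (\<integral>\<^sup>+t. ennreal (lam * p t / \<Lambda>n n * indicator {0..real n} t) * F t \<partial>lborel)"
      if k: "k \<in> S" and F[measurable]: "F \<in> borel_measurable borel" for F k
      using distributed_nn_integral[OF dens[OF k], of F] by simp
    have cc1: "(\<integral>\<^sup>+\<omega>. ennreal (G (U n k \<omega>)) \<partial>M) = ennreal (lam / \<Lambda>n n) * J1n n" if k: "k \<in> S" for k
    proof -
      have "(\<integral>\<^sup>+\<omega>. ennreal (G (U n k \<omega>)) \<partial>M) = (\<integral>\<^sup>+t. ennreal (lam * p t / \<Lambda>n n * indicator {0..real n} t) * ennreal (G t) \<partial>lborel)"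
        by (rule Udist[OF k]) measurable
      also have "\<dots> = (\<integral>\<^sup>+t. ennreal (lam / \<Lambda>n n) * (ennreal (G t * p t) * indicator {0..real n} t) \<partial>lborel)"
        using lam_pos Lnn[of n] p_nonneg G_nonneg
        by (intro nn_integral_cong) (auto simp: indicator_def ennreal_mult[symmetric] mult.commute mult.left_commute)
      also have "\<dots> = ennreal (lam / \<Lambda>n n) * J1n n" unfolding J1n_def by (rule nn_integral_cmult) measurable
      finally show ?thesis .
    qed
    have cc2: "(\<integral>\<^sup>+\<omega>. ennreal (G (U n k \<omega>)) * ennreal (G (U n k \<omega>)) \<partial>M) = ennreal (lam / \<Lambda>n n) * J2n n" if k: "k \<in> S" for k
    proof -
      have "(\<integral>\<^sup>+\<omega>. ennreal (G (U n k \<omega>)) * ennreal (G (U n k \<omega>)) \<partial>M) = (\<integral>\<^sup>+t. ennreal (lam * p t / \<Lambda>n n * indicator {0..real n} t) * (ennreal (G t) * ennreal (G t)) \<partial>lborel)"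
        by (rule Udist[OF k, of "\<lambda>t. ennreal (G t) * ennreal (G t)"]) measurable
      also have "\<dots> = (\<integral>\<^sup>+t. ennreal (lam / \<Lambda>n n) * (ennreal (G t * G t * p t) * indicator {0..real n} t) \<partial>lborel)"
        using lam_pos Lnn[of n] p_nonneg G_nonneg
        by (intro nn_integral_cong) (auto simp: indicator_def ennreal_mult[symmetric] mult.commute mult.left_commute)
      also have "\<dots> = ennreal (lam / \<Lambda>n n) * J2n n" unfolding J2n_def by (rule nn_integral_cmult) measurable
      finally show ?thesis .
    qed
    have Unn: "AE \<omega> in M. \<forall>k\<in>S. U n k \<omega> \<ge> 0"
    proof (rule AE_finite_allI[OF fS])
      fix k assume k: "k \<in> S"
      have "AE t in density lborel (\<lambda>t. ennreal (lam * p t / \<Lambda>n n * indicator {0..real n} t)). t \<ge> 0"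
        by (subst AE_density) (auto simp: indicator_def)
      then have "AE t in distr M lborel (U n k). t \<ge> 0"
        by (subst distributed_distr_eq_density[OF dens[OF k]])
      then show "AE \<omega> in M. U n k \<omega> \<ge> 0"
        by (rule AE_distrD[OF distributed_measurable[OF dens[OF k]]])
    qed
    have InE: "In n = (\<lambda>\<omega>. \<Sum>k\<in>S. P * H k \<omega> * G (U n k \<omega>))"
      unfolding S_def Nn_def by (rule ext) (rule In_def)
    have Umeas: "k \<in> S \<Longrightarrow> U n k \<in> borel_measurable M" for k using distributed_measurable[OF dens] by simp
    have Inm: "In n \<in> borel_measurable M" unfolding InE
      by (intro borel_measurable_sum borel_measurable_times borel_measurable_const Hm
               measurable_compose[OF Umeas G_meas]) auto
    note IM = In_moments[OF M P_pos fS G_meas G_nonneg H_nonneg H_indep m1k m2k Uind Unn cc1 cc2 UH]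
    have E1': "(\<integral>\<^sup>+\<omega>. ennreal (In n \<omega>) \<partial>M) = ennreal P * (of_nat (card S) * (m1 * (ennreal (lam / \<Lambda>n n) * J1n n)))"
      unfolding InE by (rule IM(1))
    have E1: "(\<integral>\<^sup>+\<omega>. ennreal (In n \<omega>) \<partial>M) = ennreal (P * (real (Nn n) * (m1r * c1r n)))"
      unfolding E1' cS m1e c1r_def j1ne using lam_pos Lnn[of n] nn nnn P_pos
      by (simp add: ennreal_mult[symmetric] ennreal_of_nat_eq_real_of_nat)
    have E2': "(\<integral>\<^sup>+\<omega>. ennreal ((In n \<omega>)^2) \<partial>M) = ennreal P * ennreal P *
           (of_nat (card S) * (m2 * (ennreal (lam / \<Lambda>n n) * J2n n) + of_nat (card S - 1) * (m1 * m1 * ((ennreal (lam / \<Lambda>n n) * J1n n) * (ennreal (lam / \<Lambda>n n) * J1n n)))))"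
      unfolding InE by (rule IM(2))
    have E2: "(\<integral>\<^sup>+\<omega>. ennreal ((In n \<omega>)^2) \<partial>M) =
       ennreal (P * P * (real (Nn n) * (m2r * c2r n + real (Nn n - 1) * (m1r * m1r * (c1r n * c1r n)))))"
      unfolding E2' cS m1e m2e c1r_def c2r_def j1ne j2ne using lam_pos Lnn[of n] nn nnn P_pos
      by (simp add: ennreal_mult[symmetric] ennreal_plus[symmetric] ennreal_of_nat_eq_real_of_nat del: ennreal_plus)
    have AEH: "AE \<omega> in M. \<forall>k. H k \<omega> \<ge> 0" using H_nonneg by (simp add: AE_all_countable)
    have Inn: "AE \<omega> in M. In n \<omega> \<ge> 0"
      using Unn AEH
    proof eventually_elim
      case (elim \<omega>)
      then show ?case unfolding InE using P_pos G_nonneg by (auto intro!: sum_nonneg mult_nonneg_nonneg)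
    qed
    show ?thesis
      using mom_to_var[OF M Inm Inn E1 E2] nn nnn P_pos by auto
  qed
  have ev1: "eventually (\<lambda>n. \<Lambda>n n \<ge> 1) sequentially"
    using Lam_top by (simp add: filterlim_at_top)
  have inv0: "(\<lambda>n. inverse (\<Lambda>n n)) \<longlonglongrightarrow> 0" by (rule tendsto_inverse_0_at_top[OF Lam_top])
  have Nbound: "\<Lambda>n n \<le> real (Nn n) \<and> real (Nn n) < \<Lambda>n n + 1" for n
  proof -
    have "real (Nn n) = real_of_int \<lceil>\<Lambda>n n\<rceil>" unfolding Nn_def using Lnn[of n] by simp
    then show ?thesis by linarith
  qed
  have rlim: "(\<lambda>n. real (Nn n) / \<Lambda>n n) \<longlonglongrightarrow> 1"
  proof (rule tendsto_sandwich[where f="\<lambda>_. 1" and h="\<lambda>n. 1 + inverse (\<Lambda>n n)"])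
    show "eventually (\<lambda>n. 1 \<le> real (Nn n) / \<Lambda>n n) sequentially"
      using ev1 by eventually_elim (use Nbound in \<open>simp add: field_simps\<close>)
    show "eventually (\<lambda>n. real (Nn n) / \<Lambda>n n \<le> 1 + inverse (\<Lambda>n n)) sequentially"
      using ev1
    proof eventually_elim
      case (elim n)
      then have "real (Nn n) \<le> \<Lambda>n n + 1" using Nbound[of n] by simp
      then show ?case using elim by (simp add: field_simps)
    qed
    show "(\<lambda>n. 1 + inverse (\<Lambda>n n)) \<longlonglongrightarrow> 1" using tendsto_add[OF tendsto_const inv0] by simp
  qed simp
  have j1lim: "(\<lambda>n. j1n n) \<longlonglongrightarrow> j1" using J1lim unfolding j1n_def j1_def .
  have j2lim: "(\<lambda>n. j2n n) \<longlonglongrightarrow> j2" using J2lim unfolding j2n_def j2_def .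
  have evE: "eventually (\<lambda>n. integral\<^sup>L M (In n) = P * m1r * lam * ((real (Nn n) / \<Lambda>n n) * j1n n)) sequentially"
    using ev1
  proof eventually_elim
    case (elim n)
    then show ?case using InMom[of n] unfolding c1r_def by (simp add: field_simps)
  qed
  have evV: "eventually (\<lambda>n. integral\<^sup>L M (\<lambda>\<omega>. (In n \<omega> - integral\<^sup>L M (In n))^2) =
      P*P*(m2r*lam*((real (Nn n) / \<Lambda>n n)*j2n n) - m1r*m1r*lam*lam*((real (Nn n) / \<Lambda>n n)*(j1n n*j1n n)*inverse (\<Lambda>n n)))) sequentially"
    using ev1
  proof eventually_elim
    case (elim n)
    have N1: "Nn n \<ge> 1" using Nbound[of n] elim by linarith
    then have N1eq: "real (Nn n - 1) = real (Nn n) - 1" by simp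
    have "integral\<^sup>L M (\<lambda>\<omega>. (In n \<omega> - integral\<^sup>L M (In n))^2) =
      P * P * (real (Nn n) * (m2r * c2r n + real (Nn n - 1) * (m1r * m1r * (c1r n * c1r n)))) - (P * (real (Nn n) * (m1r * c1r n)))^2"
      using InMom[of n] by blast
    also have "\<dots> = P*P*(real (Nn n)*(m2r*(lam/\<Lambda>n n*j2n n) + (real (Nn n)-1)*(m1r*m1r*((lam/\<Lambda>n n*j1n n)*(lam/\<Lambda>n n*j1n n))))) - (P*(real (Nn n)*(m1r*(lam/\<Lambda>n n*j1n n))))^2"
      unfolding c1r_def c2r_def N1eq ..
    also have "\<dots> = P*P*(m2r*lam*((real (Nn n) / \<Lambda>n n)*j2n n) - m1r*m1r*lam*lam*((real (Nn n) / \<Lambda>n n)*(j1n n*j1n n)*inverse (\<Lambda>n n)))"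
      by (rule var_alg) (use elim in simp)
    finally show ?case .
  qed
  have limE: "(\<lambda>n. P * m1r * lam * ((real (Nn n) / \<Lambda>n n) * j1n n)) \<longlonglongrightarrow> P * m1r * lam * (1 * j1)"
    by (intro tendsto_intros rlim j1lim)
  have limV: "(\<lambda>n. P*P*(m2r*lam*((real (Nn n) / \<Lambda>n n)*j2n n) - m1r*m1r*lam*lam*((real (Nn n) / \<Lambda>n n)*(j1n n*j1n n)*inverse (\<Lambda>n n))))
      \<longlonglongrightarrow> P*P*(m2r*lam*(1*j2) - m1r*m1r*lam*lam*(1*(j1*j1)*0))"
    by (intro tendsto_intros rlim j1lim j2lim inv0)
  show ?thesis
  proof
    show "(\<lambda>n. integral\<^sup>L M (In n)) \<longlonglongrightarrow> integral\<^sup>L M Ilam"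
      unfolding EIlam using tendsto_cong[OF evE] limE by (simp add: ac_simps)
    show "(\<lambda>n. integral\<^sup>L M (\<lambda>\<omega>. (In n \<omega> - integral\<^sup>L M (In n))\<^sup>2)) \<longlonglongrightarrow>
        integral\<^sup>L M (\<lambda>\<omega>. (Ilam \<omega> - integral\<^sup>L M Ilam)\<^sup>2)"
      unfolding VIlam var_alg2 using tendsto_cong[OF evV] limV by simp
  qed
qed


end
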